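(* Let $(\Sigma,\sigma)$ be a (possibly nodal) symmetric surface and $(V,\varphi)$ a real bundle pair over $(\Sigma,\sigma)$. For every $x\in\Sigma\setminus\Sigma^\sigma$, every open neighborhood $U\subset\Sigma$ of $x$, and every path $\psi_{t;x}$ ($t\in[0,1]$) in $\mathrm{SL}(V_x)$, there exists a path $\Psi_t$ in $\mathrm{SL}(V,\varphi)$ such that $\Psi_t|_x=\psi_{t;x}$ for all $t$ and $\Psi_t=\mathrm{Id}$ over $\Sigma\setminus(U\cup\sigma(U))$. The same holds with $\mathrm{SL}(V_x)$ and $\mathrm{SL}(V,\varphi)$ replaced by $\mathrm{GL}(V_x)$ and $\mathrm{GL}(V,\varphi)$.
   Context: A symmetric surface $(\Sigma,\sigma)$ is a closed oriented (possibly nodal) surface with an orientation-reversing involution $\sigma$; $\Sigma^\sigma$ is its fixed locus. A real bundle pair $(V,\varphi)$ over $(\Sigma,\sigma)$ is a complex vector bundle $V\to\Sigma$ with a bundle map $\varphi$ covering $\sigma$, anti-complex-linear on fibers, with $\varphi^2=\mathrm{id}$. $\mathrm{GL}(V_x)$ and $\mathrm{SL}(V_x)$ are the complex-linear automorphisms of the fiber $V_x$ and those of complex determinant $1$. $\mathrm{GL}(V,\varphi)$ is the group of $\mathbb C$-linear bundle automorphisms of $V$ covering $\mathrm{id}_\Sigma$ and commuting with $\varphi$, and $\mathrm{SL}(V,\varphi)$ the subgroup of those inducing the identity on $\Lambda^{\mathrm{top}}_{\mathbb C}V$. *)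

theory Defs
  imports "HOL-Analysis.Analysis" "HOL-Homology.Homology"
begin

text \<open>Local model of a node: two discs meeting transversally at one point.\<close>
definition nodal_model :: "(complex \<times> complex) set" where
  "nodal_model = {(z, w). z * w = 0 \<and> norm z < 1 \<and> norm w < 1}"

definition smooth_point :: "'a topology \<Rightarrow> 'a \<Rightarrow> bool" where
  "smooth_point X x \<longleftrightarrow> (\<exists>W f. openin X W \<and> x \<in> W \<and>
      homeomorphic_map (subtopology X W) (top_of_set (ball (0::complex) 1)) f)"

definition node_point :: "'a topology \<Rightarrow> 'a \<Rightarrow> bool" where
  "node_point X x \<longleftrightarrow> (\<exists>W f. openin X W \<and> x \<in> W \<and>
      homeomorphic_map (subtopology X W) (top_of_set nodal_model) f \<and> f x = (0, 0))"

definition smooth_locus :: "'a topology \<Rightarrow> 'a set" where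
  "smooth_locus X = {x \<in> topspace X. smooth_point X x}"

definition nodal_surface :: "'a topology \<Rightarrow> bool" where
  "nodal_surface X \<longleftrightarrow> compact_space X \<and> Hausdorff_space X \<and>
     (\<forall>x\<in>topspace X. smooth_point X x \<or> node_point X x)"

text \<open>Topological orientation (in the sense of singular homology) of the smooth locus,
  which is the same as an orientation of the normalization.\<close>
definition local_homology_generator :: "'a topology \<Rightarrow> 'a \<Rightarrow> 'a chain set \<Rightarrow> bool" where
  "local_homology_generator X x a \<longleftrightarrow>
     (let G = relative_homology_group 2 X (topspace X - {x}) in
       a \<in> carrier G \<and> (\<forall>b\<in>carrier G. \<exists>k::int. b = a [^]\<^bsub>G\<^esub> k))"

definition orientation :: "'a topology \<Rightarrow> ('a \<Rightarrow> 'a chain set) \<Rightarrow> bool" where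
  "orientation X ort \<longleftrightarrow>
     (\<forall>x\<in>smooth_locus X. local_homology_generator X x (ort x)) \<and>
     (\<forall>x\<in>smooth_locus X. \<exists>B U \<alpha>. openin X U \<and> x \<in> U \<and> U \<subseteq> B \<and> B \<subseteq> smooth_locus X \<and>
         \<alpha> \<in> carrier (relative_homology_group 2 X (topspace X - B)) \<and>
         (\<forall>y\<in>B. hom_induced 2 X (topspace X - B) X (topspace X - {y}) id \<alpha> = ort y))"

definition orientation_reversing :: "'a topology \<Rightarrow> ('a \<Rightarrow> 'a chain set) \<Rightarrow> ('a \<Rightarrow> 'a) \<Rightarrow> bool" where
  "orientation_reversing X ort \<sigma> \<longleftrightarrow>
     (\<forall>x\<in>smooth_locus X.
        hom_induced 2 X (topspace X - {x}) X (topspace X - {\<sigma> x}) \<sigma> (ort x)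
        = inv\<^bsub>relative_homology_group 2 X (topspace X - {\<sigma> x})\<^esub> (ort (\<sigma> x)))"

definition symmetric_surface :: "'a topology \<Rightarrow> ('a \<Rightarrow> 'a) \<Rightarrow> bool" where
  "symmetric_surface X \<sigma> \<longleftrightarrow> nodal_surface X \<and> continuous_map X X \<sigma> \<and>
     (\<forall>x\<in>topspace X. \<sigma> (\<sigma> x) = x) \<and>
     (\<exists>ort. orientation X ort \<and> orientation_reversing X ort \<sigma>)"

definition fixed_locus :: "'a topology \<Rightarrow> ('a \<Rightarrow> 'a) \<Rightarrow> 'a set" where
  "fixed_locus X \<sigma> = {x \<in> topspace X. \<sigma> x = x}"

definition complex_vector_bundle ::
  "'n::finite itself \<Rightarrow> 'a topology \<Rightarrow> 'e topology \<Rightarrow> ('e \<Rightarrow> 'a) \<Rightarrow>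
   ('e \<Rightarrow> 'e \<Rightarrow> 'e) \<Rightarrow> (complex \<Rightarrow> 'e \<Rightarrow> 'e) \<Rightarrow> bool" where
  "complex_vector_bundle _ X E p vadd vsmul \<longleftrightarrow>
     continuous_map E X p \<and>
     (\<forall>e1\<in>topspace E. \<forall>e2\<in>topspace E. p e1 = p e2 \<longrightarrow>
         vadd e1 e2 \<in> topspace E \<and> p (vadd e1 e2) = p e1) \<and>
     (\<forall>c. \<forall>e\<in>topspace E. vsmul c e \<in> topspace E \<and> p (vsmul c e) = p e) \<and>
     (\<forall>x\<in>topspace X. \<exists>W (h :: 'e \<Rightarrow> 'a \<times> (complex^'n)). openin X W \<and> x \<in> W \<and>
        homeomorphic_map (subtopology E {e \<in> topspace E. p e \<in> W})
                         (prod_topology (subtopology X W) euclidean) h \<and>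
        (\<forall>e\<in>topspace E. p e \<in> W \<longrightarrow> fst (h e) = p e) \<and>
        (\<forall>e1\<in>topspace E. \<forall>e2\<in>topspace E. p e1 \<in> W \<and> p e1 = p e2 \<longrightarrow>
            h (vadd e1 e2) = (p e1, snd (h e1) + snd (h e2))) \<and>
        (\<forall>c. \<forall>e\<in>topspace E. p e \<in> W \<longrightarrow> h (vsmul c e) = (p e, c *s snd (h e))))"

definition fibre :: "'e topology \<Rightarrow> ('e \<Rightarrow> 'a) \<Rightarrow> 'a \<Rightarrow> 'e set" where
  "fibre E p x = {e \<in> topspace E. p e = x}"

definition real_bundle_pair ::
  "'n::finite itself \<Rightarrow> 'a topology \<Rightarrow> ('a \<Rightarrow> 'a) \<Rightarrow> 'e topology \<Rightarrow> ('e \<Rightarrow> 'a) \<Rightarrow>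
   ('e \<Rightarrow> 'e \<Rightarrow> 'e) \<Rightarrow> (complex \<Rightarrow> 'e \<Rightarrow> 'e) \<Rightarrow> ('e \<Rightarrow> 'e) \<Rightarrow> bool" where
  "real_bundle_pair n X \<sigma> E p vadd vsmul \<phi> \<longleftrightarrow>
     complex_vector_bundle n X E p vadd vsmul \<and>
     continuous_map E E \<phi> \<and>
     (\<forall>e\<in>topspace E. p (\<phi> e) = \<sigma> (p e)) \<and>
     (\<forall>e\<in>topspace E. \<phi> (\<phi> e) = e) \<and>
     (\<forall>e1\<in>topspace E. \<forall>e2\<in>topspace E. p e1 = p e2 \<longrightarrow> \<phi> (vadd e1 e2) = vadd (\<phi> e1) (\<phi> e2)) \<and>
     (\<forall>c. \<forall>e\<in>topspace E. \<phi> (vsmul c e) = vsmul (cnj c) (\<phi> e))"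

definition fibre_linear ::
  "'e topology \<Rightarrow> ('e \<Rightarrow> 'a) \<Rightarrow> ('e \<Rightarrow> 'e \<Rightarrow> 'e) \<Rightarrow> (complex \<Rightarrow> 'e \<Rightarrow> 'e) \<Rightarrow> 'a \<Rightarrow> ('e \<Rightarrow> 'e) \<Rightarrow> bool" where
  "fibre_linear E p vadd vsmul x f \<longleftrightarrow>
     f \<in> fibre E p x \<rightarrow> fibre E p x \<and>
     (\<forall>e1\<in>fibre E p x. \<forall>e2\<in>fibre E p x. f (vadd e1 e2) = vadd (f e1) (f e2)) \<and>
     (\<forall>c. \<forall>e\<in>fibre E p x. f (vsmul c e) = vsmul c (f e))"

definition fibre_frame ::
  "'n::finite itself \<Rightarrow> 'e topology \<Rightarrow> ('e \<Rightarrow> 'a) \<Rightarrow> ('e \<Rightarrow> 'e \<Rightarrow> 'e) \<Rightarrow> (complex \<Rightarrow> 'e \<Rightarrow> 'e) \<Rightarrow>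
   'a \<Rightarrow> (complex^'n \<Rightarrow> 'e) \<Rightarrow> bool" where
  "fibre_frame _ E p vadd vsmul x b \<longleftrightarrow>
     bij_betw b UNIV (fibre E p x) \<and>
     (\<forall>u v. b (u + v) = vadd (b u) (b v)) \<and> (\<forall>c v. b (c *s v) = vsmul c (b v))"

definition in_GL_fibre ::
  "'e topology \<Rightarrow> ('e \<Rightarrow> 'a) \<Rightarrow> ('e \<Rightarrow> 'e \<Rightarrow> 'e) \<Rightarrow> (complex \<Rightarrow> 'e \<Rightarrow> 'e) \<Rightarrow> 'a \<Rightarrow> ('e \<Rightarrow> 'e) \<Rightarrow> bool" where
  "in_GL_fibre E p vadd vsmul x f \<longleftrightarrow>
     fibre_linear E p vadd vsmul x f \<and> bij_betw f (fibre E p x) (fibre E p x)"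

text \<open>SL(V_x): those of complex determinant 1 (determinant computed in any frame;
  equivalently, acting as the identity on the top exterior power).\<close>
definition in_SL_fibre ::
  "'n::finite itself \<Rightarrow> 'e topology \<Rightarrow> ('e \<Rightarrow> 'a) \<Rightarrow> ('e \<Rightarrow> 'e \<Rightarrow> 'e) \<Rightarrow> (complex \<Rightarrow> 'e \<Rightarrow> 'e) \<Rightarrow>
   'a \<Rightarrow> ('e \<Rightarrow> 'e) \<Rightarrow> bool" where
  "in_SL_fibre n E p vadd vsmul x f \<longleftrightarrow>
     in_GL_fibre E p vadd vsmul x f \<and>
     (\<forall>b. fibre_frame n E p vadd vsmul x b \<longrightarrow>
        det (matrix (\<lambda>v. the_inv_into UNIV b (f (b v)))) = 1)"

text \<open>Continuous path t \<in> [0,1] of maps of the fibre V_x (continuity in the natural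
  topology of End(V_x), i.e. joint continuity since V_x is finite dimensional).\<close>
definition fibre_path_cont :: "'e topology \<Rightarrow> ('e \<Rightarrow> 'a) \<Rightarrow> 'a \<Rightarrow> (real \<Rightarrow> 'e \<Rightarrow> 'e) \<Rightarrow> bool" where
  "fibre_path_cont E p x \<psi> \<longleftrightarrow>
     continuous_map (prod_topology (top_of_set {0..1}) (subtopology E (fibre E p x))) E
       (\<lambda>(t, e). \<psi> t e)"

definition GL_fibre_path where
  "GL_fibre_path E p vadd vsmul x \<psi> \<longleftrightarrow>
     (\<forall>t\<in>{0..1}. in_GL_fibre E p vadd vsmul x (\<psi> t)) \<and> fibre_path_cont E p x \<psi>"

definition SL_fibre_path where
  "SL_fibre_path n E p vadd vsmul x \<psi> \<longleftrightarrow>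
     (\<forall>t\<in>{0..1}. in_SL_fibre n E p vadd vsmul x (\<psi> t)) \<and> fibre_path_cont E p x \<psi>"

definition in_GL_bundle where
  "in_GL_bundle X E p vadd vsmul \<phi> \<Psi> \<longleftrightarrow>
     continuous_map E E \<Psi> \<and>
     (\<forall>x\<in>topspace X. in_GL_fibre E p vadd vsmul x \<Psi>) \<and>
     (\<forall>e\<in>topspace E. \<Psi> (\<phi> e) = \<phi> (\<Psi> e))"

definition in_SL_bundle where
  "in_SL_bundle n X E p vadd vsmul \<phi> \<Psi> \<longleftrightarrow>
     in_GL_bundle X E p vadd vsmul \<phi> \<Psi> \<and>
     (\<forall>x\<in>topspace X. in_SL_fibre n E p vadd vsmul x \<Psi>)"

text \<open>Continuous paths (in the C^0 / compact-open topology; Sigma is compact).\<close>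
definition bundle_path_cont :: "'e topology \<Rightarrow> (real \<Rightarrow> 'e \<Rightarrow> 'e) \<Rightarrow> bool" where
  "bundle_path_cont E \<Psi> \<longleftrightarrow>
     continuous_map (prod_topology (top_of_set {0..1}) E) E (\<lambda>(t, e). \<Psi> t e)"

definition GL_bundle_path where
  "GL_bundle_path X E p vadd vsmul \<phi> \<Psi> \<longleftrightarrow>
     (\<forall>t\<in>{0..1}. in_GL_bundle X E p vadd vsmul \<phi> (\<Psi> t)) \<and> bundle_path_cont E \<Psi>"

definition SL_bundle_path where
  "SL_bundle_path n X E p vadd vsmul \<phi> \<Psi> \<longleftrightarrow>
     (\<forall>t\<in>{0..1}. in_SL_bundle n X E p vadd vsmul \<phi> (\<Psi> t)) \<and> bundle_path_cont E \<Psi>"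

end

theory Submission
  imports Defs "HOL-Computational_Algebra.Polynomial"
begin

lemma poly_sum_ex:
  fixes f :: "'i \<Rightarrow> complex \<Rightarrow> complex"
  assumes "finite S" "\<forall>i\<in>S. \<exists>P. \<forall>z. f i z = poly P z"
  shows "\<exists>P. \<forall>z. (\<Sum>i\<in>S. f i z) = poly P z"
  using assms
proof (induction S rule: finite_induct)
  case empty then show ?case by (intro exI[of _ 0]) simp
next
  case (insert a F)
  then obtain P Q where "\<forall>z. f a z = poly P z" "\<forall>z. (\<Sum>i\<in>F. f i z) = poly Q z" by auto
  with insert show ?case by (intro exI[of _ "P + Q"]) simp
qed

lemma poly_prod_ex:
  fixes f :: "'i \<Rightarrow> complex \<Rightarrow> complex"
  assumes "finite S" "\<forall>i\<in>S. \<exists>P. \<forall>z. f i z = poly P z"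
  shows "\<exists>P. \<forall>z. (\<Prod>i\<in>S. f i z) = poly P z"
  using assms
proof (induction S rule: finite_induct)
  case empty then show ?case by (intro exI[of _ 1]) simp
next
  case (insert a F)
  then obtain P Q where "\<forall>z. f a z = poly P z" "\<forall>z. (\<Prod>i\<in>F. f i z) = poly Q z" by auto
  with insert show ?case by (intro exI[of _ "P * Q"]) simp
qed

lemma det_affine_poly:
  fixes a b :: "'n::finite \<Rightarrow> 'n \<Rightarrow> complex"
  shows "\<exists>P. \<forall>z. det (\<chi> i j. a i j + z * b i j) = poly P z"
proof -
  have "\<exists>P. \<forall>z. (of_int (sign p) * (\<Prod>i\<in>UNIV. a i (p i) + z * b i (p i))) = poly P z" for p :: "'n \<Rightarrow> 'n"
  proof -
    have "\<exists>P. \<forall>z. (\<Prod>i\<in>UNIV. a i (p i) + z * b i (p i)) = poly P z"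
      by (rule poly_prod_ex) (auto intro!: exI[of _ "[:a i (p i), b i (p i):]" for i] simp: algebra_simps)
    then obtain P where "\<forall>z. (\<Prod>i\<in>UNIV. a i (p i) + z * b i (p i)) = poly P z" by blast
    then show ?thesis by (intro exI[of _ "Polynomial.smult (of_int (sign p) :: complex) P"]) simp
  qed
  then have "\<exists>P. \<forall>z. (\<Sum>p\<in>{p. p permutes (UNIV::'n set)}. of_int (sign p) * (\<Prod>i\<in>UNIV. a i (p i) + z * b i (p i))) = poly P z"
    by (intro poly_sum_ex) (auto simp: finite_permutations)
  then show ?thesis by (simp add: det_def)
qed

lemma GL_path_from_id:
  fixes A :: "complex^'n::finite^'n"
  assumes "invertible A"
  shows "\<exists>\<gamma>::real\<Rightarrow>complex^'n^'n. continuous_on {0..1} \<gamma> \<and> \<gamma> 0 = mat 1 \<and> \<gamma> 1 = A \<and> (\<forall>s\<in>{0..1}. invertible (\<gamma> s))"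
proof -
  define F where "F z = (\<chi> i j. (mat 1 :: complex^'n^'n) $ i $ j + z * (A $ i $ j - mat 1 $ i $ j))" for z :: complex
  obtain P where P: "\<forall>z. det (F z) = poly P z"
    using det_affine_poly[of "\<lambda>i j. (mat 1 :: complex^'n^'n) $ i $ j" "\<lambda>i j. A $ i $ j - mat 1 $ i $ j"]
    unfolding F_def by blast
  have F0: "F 0 = mat 1" by (simp add: F_def vec_eq_iff)
  have F1: "F 1 = A" by (simp add: F_def vec_eq_iff)
  have "poly P 0 = 1" using P F0 by (metis det_I)
  then have "P \<noteq> 0" by auto
  then have fin: "finite {z. poly P z = 0}" by (rule poly_roots_finite)
  define S where "S = {z. det (F z) = 0}"
  have "countable S" unfolding S_def using fin P by (simp add: countable_finite)
  then have pc: "path_connected (- S)"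
    by (intro path_connected_complement_countable) auto
  have "0 \<in> - S" "1 \<in> - S" using F0 F1 assms by (auto simp: S_def invertible_det_nz)
  then obtain g where g: "path g" "path_image g \<subseteq> - S" "pathstart g = 0" "pathfinish g = 1"
    using pc unfolding path_connected_def by blast
  define \<gamma> where "\<gamma> s = F (g s)" for s
  have "continuous_on {0..1} \<gamma>"
    unfolding \<gamma>_def F_def using g(1) unfolding path_def
    by (intro continuous_intros) auto
  moreover have "\<gamma> 0 = mat 1" "\<gamma> 1 = A" using g F0 F1 by (auto simp: \<gamma>_def pathstart_def pathfinish_def)
  moreover have "\<forall>s\<in>{0..1}. invertible (\<gamma> s)"
    using g(2) by (auto simp: \<gamma>_def invertible_det_nz S_def path_image_def)
  ultimately show ?thesis by blast
qed

lemma continuous_on_matrix_mult [continuous_intros]: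
  fixes F G :: "'x::topological_space \<Rightarrow> complex^'n::finite^'n"
  assumes "continuous_on S F" "continuous_on S G"
  shows "continuous_on S (\<lambda>x. F x ** G x)"
  unfolding matrix_matrix_mult_def
  by (intro continuous_intros assms)

lemma continuous_on_det [continuous_intros]:
  fixes F :: "'x::topological_space \<Rightarrow> complex^'n::finite^'n"
  assumes "continuous_on S F"
  shows "continuous_on S (\<lambda>x. det (F x))"
  unfolding det_def
  by (intro continuous_intros assms)

lemma matrix_inv_both:
  fixes A :: "complex^'n::finite^'n"
  assumes "invertible A"
  shows "A ** matrix_inv A = mat 1" "matrix_inv A ** A = mat 1"
  using someI_ex[of "\<lambda>A'. A ** A' = mat 1 \<and> A' ** A = mat 1"] assms
  unfolding invertible_def matrix_inv_def by auto

lemma GL_homotopy: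
  fixes M :: "real \<Rightarrow> complex^'n::finite^'n"
  assumes cM: "continuous_on {0..1} M" and iM: "\<forall>t\<in>{0..1}. invertible (M t)"
  shows "\<exists>H::real\<Rightarrow>real\<Rightarrow>complex^'n^'n. continuous_on ({0..1}\<times>{0..1}) (\<lambda>(s,t). H s t) \<and>
     (\<forall>t\<in>{0..1}. H 1 t = M t \<and> H 0 t = mat 1) \<and>
     (\<forall>s\<in>{0..1}. \<forall>t\<in>{0..1}. invertible (H s t))"
proof -
  have i0: "invertible (M 0)" using iM by auto
  obtain \<gamma> :: "real \<Rightarrow> complex^'n^'n" where g: "continuous_on {0..1} \<gamma>" "\<gamma> 0 = mat 1" "\<gamma> 1 = M 0"
      "\<forall>s\<in>{0..1}. invertible (\<gamma> s)"
    using GL_path_from_id[OF i0] by blast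
  define H where "H s t = \<gamma> s ** matrix_inv (M 0) ** M (s * t)" for s t
  have "continuous_on ({0..1}\<times>{0..1}) (\<lambda>(s,t). H s t)"
  proof -
    have c1: "continuous_on ({0..1}\<times>{0..1}) (\<lambda>x. \<gamma> (fst x))"
      by (rule continuous_on_compose2[OF g(1)]) (auto intro: continuous_intros)
    have c2: "continuous_on ({0..1}\<times>{0..1}) (\<lambda>x. M (fst x * snd x))"
      by (rule continuous_on_compose2[OF cM]) (auto intro!: continuous_intros mult_le_one)
    have "continuous_on ({0..1}\<times>{0..1}) (\<lambda>x. \<gamma> (fst x) ** matrix_inv (M 0) ** M (fst x * snd x))"
      by (intro continuous_intros c1 c2)
    then show ?thesis by (simp add: H_def case_prod_beta)
  qed
  moreover have "\<forall>t\<in>{0..1}. H 1 t = M t \<and> H 0 t = mat 1"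
    using g matrix_inv_both[OF i0] by (simp add: H_def matrix_mul_assoc[symmetric])
  moreover have "\<forall>s\<in>{0..1}. \<forall>t\<in>{0..1}. invertible (H s t)"
  proof (intro ballI)
    fix s t :: real assume st: "s \<in> {0..1}" "t \<in> {0..1}"
    then have "s * t \<in> {0..1}" by (auto intro: mult_le_one)
    then have "invertible (M (s*t))" using iM by auto
    moreover have "invertible (matrix_inv (M 0))"
      using matrix_inv_both[OF i0] unfolding invertible_def by blast
    ultimately show "invertible (H s t)" using g(4) st
      by (simp add: H_def invertible_mult)
  qed
  ultimately show ?thesis by blast
qed

lemma SL_homotopy:
  fixes M :: "real \<Rightarrow> complex^'n::finite^'n"
  assumes cM: "continuous_on {0..1} M" and iM: "\<forall>t\<in>{0..1}. det (M t) = 1"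
  shows "\<exists>H::real\<Rightarrow>real\<Rightarrow>complex^'n^'n. continuous_on ({0..1}\<times>{0..1}) (\<lambda>(s,t). H s t) \<and>
     (\<forall>t\<in>{0..1}. H 1 t = M t \<and> H 0 t = mat 1) \<and>
     (\<forall>s\<in>{0..1}. \<forall>t\<in>{0..1}. det (H s t) = 1)"
proof -
  have "\<forall>t\<in>{0..1}. invertible (M t)" using iM by (simp add: invertible_det_nz)
  then obtain H :: "real\<Rightarrow>real\<Rightarrow>complex^'n^'n" where H: "continuous_on ({0..1}\<times>{0..1}) (\<lambda>(s,t). H s t)"
     "\<forall>t\<in>{0..1}. H 1 t = M t \<and> H 0 t = mat 1"
     "\<forall>s\<in>{0..1}. \<forall>t\<in>{0..1}. invertible (H s t)"
    using GL_homotopy[OF cM] by blast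
  define i0 :: 'n where "i0 = undefined"
  define D where "D s t = (\<chi> i j. if i = j then (if i = i0 then inverse (det (H s t)) else 1) else 0)" for s t
  define H' where "H' s t = H s t ** D s t" for s t
  have detD: "det (D s t) = inverse (det (H s t))" for s t
    by (subst det_diagonal) (auto simp: D_def prod.If_cases)
  have "continuous_on ({0..1}\<times>{0..1}) (\<lambda>(s,t). H' s t)"
  proof -
    have cH: "continuous_on ({0..1}\<times>{0..1}) (\<lambda>x. H (fst x) (snd x))"
      using H(1) by (simp add: case_prod_beta)
    have nz: "\<forall>x\<in>{0..1}\<times>{0..1}. det (H (fst x) (snd x)) \<noteq> 0"
      using H(3) by (auto simp: invertible_det_nz)
    have "continuous_on ({0..1}\<times>{0..1}) (\<lambda>x. H (fst x) (snd x) ** D (fst x) (snd x))"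
      unfolding D_def
      apply (intro continuous_on_matrix_mult cH continuous_on_vec_lambda)
      subgoal for i j by (cases "i = j"; cases "i = i0") (auto intro!: continuous_intros cH nz)
      done
    then show ?thesis by (simp add: H'_def case_prod_beta)
  qed
  moreover have "\<forall>t\<in>{0..1}. H' 1 t = M t \<and> H' 0 t = mat 1"
  proof
    fix t :: real assume t: "t \<in> {0..1}"
    have h: "H 1 t = M t" "H 0 t = mat 1" using H(2) t by auto
    have "det (H 1 t) = 1" "det (H 0 t) = 1" using h iM t by auto
    then have "D 1 t = mat 1" "D 0 t = mat 1"
      by (auto simp: D_def mat_def vec_eq_iff)
    then show "H' 1 t = M t \<and> H' 0 t = mat 1" using H(2) t by (simp add: H'_def)
  qed
  moreover have "\<forall>s\<in>{0..1}. \<forall>t\<in>{0..1}. det (H' s t) = 1"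
    using H(3) by (auto simp: H'_def det_mul detD invertible_det_nz)
  ultimately show ?thesis by blast
qed

lemma cutoff_exists:
  fixes X :: "'a topology"
  assumes cX: "compact_space X" and hX: "Hausdorff_space X" and cs: "continuous_map X X \<sigma>"
    and inv: "\<forall>y\<in>topspace X. \<sigma> (\<sigma> y) = y" and x: "x \<in> topspace X" "\<sigma> x \<noteq> x"
    and U0: "openin X U0" "x \<in> U0"
  shows "\<exists>W V (\<rho>::'a\<Rightarrow>real). openin X W \<and> x \<in> W \<and> W \<subseteq> U0 \<and> (\<forall>y\<in>W. \<sigma> y \<notin> W) \<and>
     openin X V \<and> x \<in> V \<and> X closure_of V \<subseteq> W \<and>
     continuous_map X (top_of_set {0..1}) \<rho> \<and> \<rho> x = 1 \<and> (\<forall>y\<in>topspace X - V. \<rho> y = 0)"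
proof -
  have sx: "\<sigma> x \<in> topspace X" using continuous_map_image_subset_topspace[OF cs] x(1) by blast
  obtain A B where AB: "openin X A" "openin X B" "x \<in> A" "\<sigma> x \<in> B" "disjnt A B"
  proof -
    have xx: "x \<in> topspace X \<and> \<sigma> x \<in> topspace X \<and> x \<noteq> \<sigma> x" using x sx by auto
    have "\<exists>A B. openin X A \<and> openin X B \<and> x \<in> A \<and> \<sigma> x \<in> B \<and> disjnt A B"
      using hX xx unfolding Hausdorff_space_def by blast
    then show ?thesis using that by blast
  qed
  define W where "W = A \<inter> U0 \<inter> {y \<in> topspace X. \<sigma> y \<in> B}"
  have oW: "openin X W" unfolding W_def
    using AB(1) U0(1) openin_continuous_map_preimage[OF cs AB(2)] by (intro openin_Int)
  have xW: "x \<in> W" using AB U0 x by (auto simp: W_def)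
  have sW: "\<forall>y\<in>W. \<sigma> y \<notin> W"
    using AB(5) by (auto simp: W_def disjnt_iff)
  have rX: "regular_space X" using cX hX by (rule compact_Hausdorff_imp_regular_space)
  obtain V where V: "openin X V" "x \<in> V" "disjnt (topspace X - W) (X closure_of V)"
  proof -
    have "closedin X (topspace X - W)" using oW by auto
    moreover have "x \<in> topspace X - (topspace X - W)" using xW x by auto
    ultimately show ?thesis using rX that unfolding regular_space by blast
  qed
  have clV: "X closure_of V \<subseteq> W" using V(3) closure_of_subset_topspace by (fastforce simp: disjnt_iff)
  have nX: "normal_space X" using cX hX by (simp add: compact_Hausdorff_or_regular_imp_normal_space)
  have c1: "closedin X (topspace X - V)" using V(1) by auto
  have c2: "closedin X {x}" using hX x by (simp add: closedin_Hausdorff_singleton)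
  have d: "disjnt (topspace X - V) {x}" using V(2) by auto
  obtain \<rho> :: "'a \<Rightarrow> real" where r: "continuous_map X (top_of_set {0..1}) \<rho>" "\<rho> ` (topspace X - V) \<subseteq> {0}" "\<rho> ` {x} \<subseteq> {1}"
    using Urysohn_lemma[OF nX c1 c2 d, of 0 1] by auto
  show ?thesis
    apply (rule exI[of _ W], rule exI[of _ V], rule exI[of _ \<rho>])
    using oW xW sW V(1,2) clV r
    by (auto simp: W_def)
qed

lemma vlinI:
  fixes F :: "complex^'n::finite \<Rightarrow> complex^'m::finite"
  assumes "\<And>u v. F (u + v) = F u + F v" "\<And>c v. F (c *s v) = c *s F v"
  shows "Vector_Spaces.linear (*s) (*s) F"
  by unfold_locales (use assms in auto)

lemma in_GL_fibre_id: "in_GL_fibre E p vadd vsmul y (\<lambda>e. e)"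
  unfolding in_GL_fibre_def fibre_linear_def using bij_betw_id[unfolded id_def] by auto

lemma in_SL_fibre_id: "in_SL_fibre n E p vadd vsmul y (\<lambda>e. e)"
proof -
  have "det (matrix (\<lambda>v. the_inv_into UNIV b (b v))) = 1"
    if "fibre_frame n E p vadd vsmul y b" for b
  proof -
    have "inj b" using that unfolding fibre_frame_def bij_betw_def by auto
    then have "(\<lambda>v. the_inv_into UNIV b (b v)) = (\<lambda>v. v)" by (simp add: the_inv_f_f)
    then show ?thesis by (simp add: matrix_id_mat_1[unfolded id_def])
  qed
  then show ?thesis unfolding in_SL_fibre_def by (simp add: in_GL_fibre_id)
qed

definition vcnj :: "complex^'n \<Rightarrow> complex^'n" where "vcnj v = (\<chi> i. cnj (v $ i))"

lemma vcnj_vcnj [simp]: "vcnj (vcnj v) = v" by (simp add: vcnj_def vec_eq_iff)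
lemma vcnj_add: "vcnj (u + v) = vcnj u + vcnj v" by (simp add: vcnj_def vec_eq_iff)
lemma vcnj_smul: "vcnj (c *s v) = cnj c *s vcnj v" by (simp add: vcnj_def vec_eq_iff)
lemma vcnj_axis: "vcnj (axis j 1) = axis j 1" by (simp add: vcnj_def vec_eq_iff axis_def)
lemma vcnj_nth [simp]: "vcnj v $ i = cnj (v $ i)" by (simp add: vcnj_def)

lemma det_cnj: "det (\<chi> i j. cnj ((A::complex^'n::finite^'n) $ i $ j)) = cnj (det A)"
  unfolding det_def by (simp add: cnj_sum cnj_prod)

locale rbp_fib =
  fixes E :: "'e topology" and p :: "'e \<Rightarrow> 'a" and vadd vsmul \<phi> \<sigma>
  assumes phi_top: "\<And>e. e \<in> topspace E \<Longrightarrow> \<phi> e \<in> topspace E"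
    and phi_p: "\<And>e. e \<in> topspace E \<Longrightarrow> p (\<phi> e) = \<sigma> (p e)"
    and phi_inv: "\<And>e. e \<in> topspace E \<Longrightarrow> \<phi> (\<phi> e) = e"
    and phi_add: "\<And>e1 e2. e1 \<in> topspace E \<Longrightarrow> e2 \<in> topspace E \<Longrightarrow> p e1 = p e2 \<Longrightarrow>
                   \<phi> (vadd e1 e2) = vadd (\<phi> e1) (\<phi> e2)"
    and phi_smul: "\<And>c e. e \<in> topspace E \<Longrightarrow> \<phi> (vsmul c e) = vsmul (cnj c) (\<phi> e)"
    and add_top: "\<And>e1 e2. e1 \<in> topspace E \<Longrightarrow> e2 \<in> topspace E \<Longrightarrow> p e1 = p e2 \<Longrightarrow>
                   vadd e1 e2 \<in> topspace E \<and> p (vadd e1 e2) = p e1"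
    and smul_top: "\<And>c e. e \<in> topspace E \<Longrightarrow> vsmul c e \<in> topspace E \<and> p (vsmul c e) = p e"
begin

lemma in_GL_fibre_cong:
  assumes "in_GL_fibre E p vadd vsmul y f" "\<forall>e\<in>fibre E p y. f e = f' e"
  shows "in_GL_fibre E p vadd vsmul y f'"
proof -
  have "bij_betw f' (fibre E p y) (fibre E p y)"
    using assms bij_betw_cong[of "fibre E p y" f f'] unfolding in_GL_fibre_def by auto
  moreover have "fibre_linear E p vadd vsmul y f'"
  proof -
    have fl: "fibre_linear E p vadd vsmul y f" using assms(1) unfolding in_GL_fibre_def by auto
    have fe: "\<And>e. e \<in> fibre E p y \<Longrightarrow> f e = f' e" using assms(2) by auto
    show ?thesis unfolding fibre_linear_def
    proof (intro conjI ballI allI)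
      have "f \<in> fibre E p y \<rightarrow> fibre E p y" using fl unfolding fibre_linear_def by auto
      then show "f' \<in> fibre E p y \<rightarrow> fibre E p y" using fe by (auto simp: Pi_iff)
    next
      fix e1 e2 assume e: "e1 \<in> fibre E p y" "e2 \<in> fibre E p y"
      then have "vadd e1 e2 \<in> fibre E p y" using add_top by (auto simp: fibre_def)
      then show "f' (vadd e1 e2) = vadd (f' e1) (f' e2)"
        using fl e fe unfolding fibre_linear_def by metis
    next
      fix c e assume e: "e \<in> fibre E p y"
      then have "vsmul c e \<in> fibre E p y" using smul_top by (auto simp: fibre_def)
      then show "f' (vsmul c e) = vsmul c (f' e)"
        using fl e fe unfolding fibre_linear_def by metis
    qed
  qed
  ultimately show ?thesis by (simp add: in_GL_fibre_def)
qed

lemma in_SL_fibre_cong: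
  assumes "in_SL_fibre n E p vadd vsmul y f" "\<forall>e\<in>fibre E p y. f e = f' e"
  shows "in_SL_fibre n E p vadd vsmul y f'"
proof -
  have "in_GL_fibre E p vadd vsmul y f'"
    using assms in_GL_fibre_cong unfolding in_SL_fibre_def by blast
  moreover have "det (matrix (\<lambda>v. the_inv_into UNIV b (f' (b v)))) = 1"
    if "fibre_frame n E p vadd vsmul y b" for b
  proof -
    have "\<And>v. b v \<in> fibre E p y" using that unfolding fibre_frame_def bij_betw_def by auto
    then have "(\<lambda>v. the_inv_into UNIV b (f' (b v))) = (\<lambda>v. the_inv_into UNIV b (f (b v)))"
      using assms(2) by auto
    then show ?thesis using assms(1) that unfolding in_SL_fibre_def by auto
  qed
  ultimately show ?thesis unfolding in_SL_fibre_def by blast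
qed

lemma phi_fibre: "\<sigma> (\<sigma> y) = y \<Longrightarrow> e \<in> fibre E p y \<Longrightarrow> \<phi> e \<in> fibre E p (\<sigma> y)"
  by (auto simp: fibre_def phi_top phi_p)

lemma phi_bij: "\<sigma> (\<sigma> y) = y \<Longrightarrow> bij_betw \<phi> (fibre E p y) (fibre E p (\<sigma> y))"
proof (rule bij_betw_byWitness[where f'=\<phi>])
  assume s: "\<sigma> (\<sigma> y) = y"
  show "\<forall>a\<in>fibre E p y. \<phi> (\<phi> a) = a" "\<forall>a'\<in>fibre E p (\<sigma> y). \<phi> (\<phi> a') = a'"
    by (auto simp: fibre_def phi_inv)
  show "\<phi> ` fibre E p y \<subseteq> fibre E p (\<sigma> y)" using phi_fibre[OF s] by auto
  have "\<phi> e \<in> fibre E p y" if "e \<in> fibre E p (\<sigma> y)" for e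
    using phi_fibre[of "\<sigma> y" e] that s by auto
  then show "\<phi> ` fibre E p (\<sigma> y) \<subseteq> fibre E p y" by auto
qed

lemma conj_GL:
  assumes s: "\<sigma> (\<sigma> y) = y" and f: "in_GL_fibre E p vadd vsmul (\<sigma> y) f"
  shows "in_GL_fibre E p vadd vsmul y (\<lambda>e. \<phi> (f (\<phi> e)))"
proof -
  have fl: "fibre_linear E p vadd vsmul (\<sigma> y) f" and fb: "bij_betw f (fibre E p (\<sigma> y)) (fibre E p (\<sigma> y))"
    using f unfolding in_GL_fibre_def by auto
  have s2: "\<sigma> (\<sigma> (\<sigma> y)) = \<sigma> y" using s by simp
  have fin: "f e \<in> fibre E p (\<sigma> y)" if "e \<in> fibre E p (\<sigma> y)" for e
    using fl that unfolding fibre_linear_def by auto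
  have map: "\<phi> (f (\<phi> e)) \<in> fibre E p y" if "e \<in> fibre E p y" for e
    using phi_fibre[OF s2, of "f (\<phi> e)"] fin phi_fibre[OF s that] s by auto
  have add: "\<phi> (f (\<phi> (vadd e1 e2))) = vadd (\<phi> (f (\<phi> e1))) (\<phi> (f (\<phi> e2)))"
    if "e1 \<in> fibre E p y" "e2 \<in> fibre E p y" for e1 e2
  proof -
    have a: "\<phi> e1 \<in> fibre E p (\<sigma> y)" "\<phi> e2 \<in> fibre E p (\<sigma> y)" using phi_fibre[OF s] that by auto
    have "\<phi> (vadd e1 e2) = vadd (\<phi> e1) (\<phi> e2)" using that phi_add by (auto simp: fibre_def)
    moreover have "f (vadd (\<phi> e1) (\<phi> e2)) = vadd (f (\<phi> e1)) (f (\<phi> e2))"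
      using fl a unfolding fibre_linear_def by auto
    moreover have "\<phi> (vadd (f (\<phi> e1)) (f (\<phi> e2))) = vadd (\<phi> (f (\<phi> e1))) (\<phi> (f (\<phi> e2)))"
      using fin[OF a(1)] fin[OF a(2)] phi_add by (auto simp: fibre_def)
    ultimately show ?thesis by simp
  qed
  have sm: "\<phi> (f (\<phi> (vsmul c e))) = vsmul c (\<phi> (f (\<phi> e)))" if "e \<in> fibre E p y" for c e
  proof -
    have a: "\<phi> e \<in> fibre E p (\<sigma> y)" using phi_fibre[OF s] that by auto
    have "\<phi> (vsmul c e) = vsmul (cnj c) (\<phi> e)" using that phi_smul by (auto simp: fibre_def)
    moreover have "f (vsmul (cnj c) (\<phi> e)) = vsmul (cnj c) (f (\<phi> e))"
      using fl a unfolding fibre_linear_def by auto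
    moreover have "\<phi> (vsmul (cnj c) (f (\<phi> e))) = vsmul c (\<phi> (f (\<phi> e)))"
      using fin[OF a] phi_smul by (auto simp: fibre_def)
    ultimately show ?thesis by simp
  qed
  have "bij_betw (\<phi> \<circ> f \<circ> \<phi>) (fibre E p y) (fibre E p y)"
  proof -
    have "bij_betw \<phi> (fibre E p (\<sigma> y)) (fibre E p y)" using phi_bij[OF s2] s by simp
    then show ?thesis using phi_bij[OF s] fb by (blast intro: bij_betw_trans)
  qed
  then have "bij_betw (\<lambda>e. \<phi> (f (\<phi> e))) (fibre E p y) (fibre E p y)" by (simp add: comp_def)
  then show ?thesis unfolding in_GL_fibre_def fibre_linear_def using map add sm by auto
qed

lemma conj_SL:
  assumes s: "\<sigma> (\<sigma> y) = y" and f: "in_SL_fibre TYPE('n::finite) E p vadd vsmul (\<sigma> y) f"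
  shows "in_SL_fibre TYPE('n) E p vadd vsmul y (\<lambda>e. \<phi> (f (\<phi> e)))"
proof -
  have gl: "in_GL_fibre E p vadd vsmul (\<sigma> y) f" using f unfolding in_SL_fibre_def by auto
  then have fl: "fibre_linear E p vadd vsmul (\<sigma> y) f" unfolding in_GL_fibre_def by auto
  have fin: "f e \<in> fibre E p (\<sigma> y)" if "e \<in> fibre E p (\<sigma> y)" for e
    using fl that unfolding fibre_linear_def by auto
  have "det (matrix (\<lambda>v. the_inv_into UNIV b (\<phi> (f (\<phi> (b v)))))) = 1"
    if b: "fibre_frame TYPE('n) E p vadd vsmul y b" for b
  proof -
    have bb: "bij_betw b UNIV (fibre E p y)" and badd: "\<And>u v. b (u + v) = vadd (b u) (b v)"
      and bsm: "\<And>c v. b (c *s v) = vsmul c (b v)"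
      using b unfolding fibre_frame_def by auto
    have bin: "b v \<in> fibre E p y" for v using bb unfolding bij_betw_def by auto
    define b' where "b' v = \<phi> (b (vcnj v))" for v :: "complex^'n"
    have "bij_betw (\<phi> \<circ> b \<circ> vcnj) UNIV (fibre E p (\<sigma> y))"
    proof -
      have "bij_betw vcnj (UNIV::(complex^'n) set) UNIV"
        by (rule bij_betw_byWitness[where f'=vcnj]) auto
      then show ?thesis using bb phi_bij[OF s] by (blast intro: bij_betw_trans)
    qed
    moreover have "b' = \<phi> \<circ> b \<circ> vcnj" by (auto simp: b'_def fun_eq_iff)
    ultimately have bb': "bij_betw b' UNIV (fibre E p (\<sigma> y))" by simp
    have "b' (u + v) = vadd (b' u) (b' v)" for u v
      using phi_add[of "b (vcnj u)" "b (vcnj v)"] bin unfolding b'_def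
      by (auto simp: vcnj_add badd fibre_def)
    moreover have "b' (c *s v) = vsmul c (b' v)" for c v
      using phi_smul[of "b (vcnj v)" "cnj c"] bin unfolding b'_def
      by (auto simp: vcnj_smul bsm fibre_def)
    ultimately have fr: "fibre_frame TYPE('n) E p vadd vsmul (\<sigma> y) b'"
      using bb' unfolding fibre_frame_def by auto
    define L' where "L' v = the_inv_into UNIV b' (f (b' v))" for v
    have dL': "det (matrix L') = 1" using f fr unfolding in_SL_fibre_def L'_def by auto
    have key: "the_inv_into UNIV b (\<phi> (f (\<phi> (b v)))) = vcnj (L' (vcnj v))" for v
    proof -
      define w where "w = L' (vcnj v)"
      have bv': "b' (vcnj v) = \<phi> (b v)" by (simp add: b'_def)
      have "f (b' (vcnj v)) \<in> fibre E p (\<sigma> y)" using fin bb' unfolding bij_betw_def by auto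
      then have "b' w = f (b' (vcnj v))" unfolding w_def L'_def
        using f_the_inv_into_f_bij_betw[OF bb'] by auto
      then have "\<phi> (f (\<phi> (b v))) = \<phi> (b' w)" using bv' by simp
      also have "\<dots> = b (vcnj w)" using bin phi_inv by (simp add: b'_def fibre_def)
      finally have "the_inv_into UNIV b (\<phi> (f (\<phi> (b v)))) = the_inv_into UNIV b (b (vcnj w))" by simp
      also have "\<dots> = vcnj w" using bb unfolding bij_betw_def by (simp add: the_inv_f_f)
      finally show ?thesis by (simp add: w_def)
    qed
    have "matrix (\<lambda>v. the_inv_into UNIV b (\<phi> (f (\<phi> (b v))))) = (\<chi> i j. cnj (matrix L' $ i $ j))"
      by (simp add: key matrix_def vec_eq_iff vcnj_axis)
    then show ?thesis by (simp add: det_cnj dL')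
  qed
  then show ?thesis using conj_GL[OF s gl] unfolding in_SL_fibre_def by blast
qed

end

lemma frame_lin:
  assumes b: "fibre_frame n E p vadd vsmul y b" and f: "fibre_linear E p vadd vsmul y f"
  shows "Vector_Spaces.linear (*s) (*s) (\<lambda>v. the_inv_into UNIV b (f (b v)))"
proof -
  have bb: "bij_betw b UNIV (fibre E p y)" and badd: "\<And>u v. b (u + v) = vadd (b u) (b v)"
    and bsm: "\<And>c v. b (c *s v) = vsmul c (b v)"
    using b unfolding fibre_frame_def by auto
  have bin: "b v \<in> fibre E p y" for v using bb unfolding bij_betw_def by auto
  have inj: "inj b" using bb unfolding bij_betw_def by auto
  have fin: "f (b v) \<in> fibre E p y" for v using f bin unfolding fibre_linear_def by auto
  define L where "L v = the_inv_into UNIV b (f (b v))" for v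
  have bL: "b (L v) = f (b v)" for v
    unfolding L_def using f_the_inv_into_f_bij_betw[OF bb fin] .
  have "L (u + v) = L u + L v" for u v
  proof -
    have "b (L u + L v) = vadd (f (b u)) (f (b v))" by (simp add: badd bL)
    also have "\<dots> = f (vadd (b u) (b v))" using f bin unfolding fibre_linear_def by auto
    also have "\<dots> = b (L (u + v))" by (simp add: badd bL)
    finally show ?thesis using inj by (auto dest: injD)
  qed
  moreover have "L (c *s v) = c *s L v" for c v
  proof -
    have "b (c *s L v) = vsmul c (f (b v))" by (simp add: bsm bL)
    also have "\<dots> = f (vsmul c (b v))" using f bin unfolding fibre_linear_def by auto
    also have "\<dots> = b (L (c *s v))" by (simp add: bsm bL)
    finally show ?thesis using inj by (auto dest: injD)
  qed
  ultimately show ?thesis unfolding L_def[symmetric] by (intro vlinI)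
qed

locale triv =
  fixes X :: "'a topology" and E :: "'e topology" and p :: "'e \<Rightarrow> 'a"
    and vadd :: "'e \<Rightarrow> 'e \<Rightarrow> 'e" and vsmul :: "complex \<Rightarrow> 'e \<Rightarrow> 'e"
    and W0 :: "'a set" and h :: "'e \<Rightarrow> 'a \<times> (complex^'n::finite)" and g
  assumes hom: "homeomorphic_maps (subtopology E {e \<in> topspace E. p e \<in> W0})
                   (prod_topology (subtopology X W0) euclidean) h g"
    and W0sub: "W0 \<subseteq> topspace X"
    and hfst: "\<And>e. e \<in> topspace E \<Longrightarrow> p e \<in> W0 \<Longrightarrow> fst (h e) = p e"
    and hadd: "\<And>e1 e2. e1 \<in> topspace E \<Longrightarrow> e2 \<in> topspace E \<Longrightarrow> p e1 \<in> W0 \<Longrightarrow> p e1 = p e2 \<Longrightarrow>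
            h (vadd e1 e2) = (p e1, snd (h e1) + snd (h e2))"
    and hsmul: "\<And>c e. e \<in> topspace E \<Longrightarrow> p e \<in> W0 \<Longrightarrow> h (vsmul c e) = (p e, c *s snd (h e))"
    and add_top: "\<And>e1 e2. e1 \<in> topspace E \<Longrightarrow> e2 \<in> topspace E \<Longrightarrow> p e1 = p e2 \<Longrightarrow>
                   vadd e1 e2 \<in> topspace E \<and> p (vadd e1 e2) = p e1"
    and smul_top: "\<And>c e. e \<in> topspace E \<Longrightarrow> vsmul c e \<in> topspace E \<and> p (vsmul c e) = p e"
begin

lemma hg_basic:
  shows "\<And>e. e \<in> topspace E \<Longrightarrow> p e \<in> W0 \<Longrightarrow> g (h e) = e"
    and "\<And>y v. y \<in> W0 \<Longrightarrow> h (g (y, v)) = (y, v)"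
    and "\<And>y v. y \<in> W0 \<Longrightarrow> g (y, v) \<in> topspace E \<and> p (g (y, v)) \<in> W0"
proof -
  have ts: "topspace (prod_topology (subtopology X W0) (euclidean::(complex^'n) topology)) = W0 \<times> UNIV"
    using W0sub by auto
  show "\<And>e. e \<in> topspace E \<Longrightarrow> p e \<in> W0 \<Longrightarrow> g (h e) = e"
    using hom unfolding homeomorphic_maps_def by auto
  show "\<And>y v. y \<in> W0 \<Longrightarrow> h (g (y, v)) = (y, v)"
  proof -
    fix y v assume "y \<in> W0"
    then have "(y, v) \<in> topspace (prod_topology (subtopology X W0) (euclidean::(complex^'n) topology))"
      using ts by auto
    then show "h (g (y, v)) = (y, v)" using hom unfolding homeomorphic_maps_def by blast
  qed
  have "continuous_map (prod_topology (subtopology X W0) euclidean) (subtopology E {e \<in> topspace E. p e \<in> W0}) g"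
    using hom unfolding homeomorphic_maps_def by auto
  then have "g ` (W0 \<times> UNIV) \<subseteq> {e \<in> topspace E. p e \<in> W0}"
    using continuous_map_image_subset_topspace ts by fastforce
  then show "\<And>y v. y \<in> W0 \<Longrightarrow> g (y, v) \<in> topspace E \<and> p (g (y, v)) \<in> W0" by auto
qed

lemma g_in: "y \<in> W0 \<Longrightarrow> g (y, v) \<in> topspace E \<and> p (g (y, v)) = y"
  using hg_basic(2,3)[of y v] hfst[of "g (y, v)"] by auto

lemma g_fib: "y \<in> W0 \<Longrightarrow> g (y, v) \<in> fibre E p y"
  using g_in by (simp add: fibre_def)

lemma h_g: "y \<in> W0 \<Longrightarrow> h (g (y, v)) = (y, v)" by (rule hg_basic(2))

lemma fib_g: "y \<in> W0 \<Longrightarrow> e \<in> fibre E p y \<Longrightarrow> g (y, snd (h e)) = e"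
proof -
  assume y: "y \<in> W0" and e: "e \<in> fibre E p y"
  then have "h e = (y, snd (h e))" using hfst[of e] by (auto simp: fibre_def prod_eq_iff)
  then show ?thesis using hg_basic(1)[of e] e y by (auto simp: fibre_def)
qed

lemma g_add: "y \<in> W0 \<Longrightarrow> vadd (g (y, u)) (g (y, v)) = g (y, u + v)"
proof -
  assume y: "y \<in> W0"
  let ?e = "vadd (g (y, u)) (g (y, v))"
  have e: "?e \<in> fibre E p y" using add_top[of "g (y,u)" "g (y,v)"] g_in[OF y] by (auto simp: fibre_def)
  have "snd (h ?e) = u + v" using hadd[of "g (y,u)" "g (y,v)"] g_in[OF y] h_g[OF y] y by auto
  then show ?thesis using fib_g[OF y e] by simp
qed

lemma g_smul: "y \<in> W0 \<Longrightarrow> vsmul c (g (y, v)) = g (y, c *s v)"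
proof -
  assume y: "y \<in> W0"
  let ?e = "vsmul c (g (y, v))"
  have e: "?e \<in> fibre E p y" using smul_top[of "g (y,v)" c] g_in[OF y] by (auto simp: fibre_def)
  have "snd (h ?e) = c *s v" using hsmul[of "g (y,v)" c] g_in[OF y] h_g[OF y] y by auto
  then show ?thesis using fib_g[OF y e] by simp
qed

lemma h_fib_add: "y \<in> W0 \<Longrightarrow> e1 \<in> fibre E p y \<Longrightarrow> e2 \<in> fibre E p y \<Longrightarrow>
    snd (h (vadd e1 e2)) = snd (h e1) + snd (h e2)"
  using hadd[of e1 e2] by (auto simp: fibre_def)

lemma h_fib_smul: "y \<in> W0 \<Longrightarrow> e \<in> fibre E p y \<Longrightarrow> snd (h (vsmul c e)) = c *s snd (h e)"
  using hsmul[of e c] by (auto simp: fibre_def)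

definition T :: "complex^'n^'n \<Rightarrow> 'a \<Rightarrow> 'e \<Rightarrow> 'e" where
  "T G y e = g (y, G *v snd (h e))"

lemma mv_scale: "(G::complex^'n^'n) *v (c *s v) = c *s (G *v v)"
  by (simp add: matrix_vector_mult_def vec_eq_iff sum_distrib_left mult_ac)

lemma model_GL:
  assumes y: "y \<in> W0" and G: "invertible G"
  shows "in_GL_fibre E p vadd vsmul y (T G y)"
proof -
  have map: "T G y \<in> fibre E p y \<rightarrow> fibre E p y" using g_fib[OF y] by (auto simp: T_def)
  have add: "T G y (vadd e1 e2) = vadd (T G y e1) (T G y e2)"
    if "e1 \<in> fibre E p y" "e2 \<in> fibre E p y" for e1 e2
    using that by (simp add: T_def h_fib_add[OF y] g_add[OF y] matrix_vector_right_distrib)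
  have sm: "T G y (vsmul c e) = vsmul c (T G y e)" if "e \<in> fibre E p y" for c e
    using that by (simp add: T_def h_fib_smul[OF y] g_smul[OF y] mv_scale)
  obtain G' where G': "G ** G' = mat 1" "G' ** G = mat 1" using G unfolding invertible_def by blast
  have "inj_on (T G y) (fibre E p y)"
  proof (rule inj_onI)
    fix e1 e2 assume e: "e1 \<in> fibre E p y" "e2 \<in> fibre E p y" "T G y e1 = T G y e2"
    then have "G *v snd (h e1) = G *v snd (h e2)" using h_g[OF y] unfolding T_def by (metis snd_conv)
    then have "G' *v (G *v snd (h e1)) = G' *v (G *v snd (h e2))" by simp
    then have "snd (h e1) = snd (h e2)" by (simp add: matrix_vector_mul_assoc G')
    then show "e1 = e2" using fib_g[OF y] e by metis
  qed
  moreover have "T G y ` fibre E p y = fibre E p y"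
  proof
    show "T G y ` fibre E p y \<subseteq> fibre E p y" using map by auto
    show "fibre E p y \<subseteq> T G y ` fibre E p y"
    proof
      fix e assume e: "e \<in> fibre E p y"
      have "T G y (g (y, G' *v snd (h e))) = e"
        unfolding T_def using h_g[OF y] fib_g[OF y e] by (simp add: matrix_vector_mul_assoc G')
      then show "e \<in> T G y ` fibre E p y" using g_fib[OF y] by (metis image_eqI)
    qed
  qed
  ultimately show ?thesis unfolding in_GL_fibre_def fibre_linear_def bij_betw_def
    using map add sm by auto
qed

lemma model_SL:
  assumes y: "y \<in> W0" and G: "det G = 1"
  shows "in_SL_fibre TYPE('n) E p vadd vsmul y (T G y)"
proof -
  have Gi: "invertible G" using G by (simp add: invertible_det_nz)
  have gl: "in_GL_fibre E p vadd vsmul y (T G y)" by (rule model_GL[OF y Gi])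
  have "det (matrix (\<lambda>v. the_inv_into UNIV b (T G y (b v)))) = 1"
    if b: "fibre_frame TYPE('n) E p vadd vsmul y b" for b
  proof -
    have bb: "bij_betw b UNIV (fibre E p y)" and badd: "\<And>u v. b (u + v) = vadd (b u) (b v)"
      and bsm: "\<And>c v. b (c *s v) = vsmul c (b v)"
      using b unfolding fibre_frame_def by auto
    have bin: "b v \<in> fibre E p y" for v using bb unfolding bij_betw_def by auto
    define L where "L v = the_inv_into UNIV b (T G y (b v))" for v
    have Llin: "Vector_Spaces.linear (*s) (*s) L"
      unfolding L_def by (rule frame_lin[OF b]) (use gl in \<open>simp add: in_GL_fibre_def\<close>)
    define c where "c v = snd (h (b v))" for v
    have clin: "Vector_Spaces.linear (*s) (*s) c"
      by (rule vlinI) (simp_all add: c_def badd bsm h_fib_add[OF y bin bin] h_fib_smul[OF y bin])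
    have bc: "b v = g (y, c v)" for v using fib_g[OF y bin] by (simp add: c_def)
    have cinj: "inj c"
    proof (rule injI)
      fix u v assume "c u = c v"
      then have "b u = b v" using bc by metis
      then show "u = v" using bb unfolding bij_betw_def by (auto dest: injD)
    qed
    have csurj: "surj c"
    proof -
      have "w \<in> range c" for w
      proof -
        obtain u where "b u = g (y, w)" using bb g_fib[OF y] unfolding bij_betw_def by (metis imageE UNIV_I)
        then have "c u = w" by (simp add: c_def h_g[OF y])
        then show ?thesis by auto
      qed
      then show ?thesis by auto
    qed
    have ci: "invertible (matrix c)"
      unfolding invertible_eq_bij matrix_vector_mul(1)[OF clin] using cinj csurj by (simp add: bij_def)
    have "b (L v) = T G y (b v)" for v
      unfolding L_def using f_the_inv_into_f_bij_betw[OF bb] gl bin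
      unfolding in_GL_fibre_def fibre_linear_def by auto
    then have "c (L v) = G *v c v" for v
      by (simp add: c_def T_def h_g[OF y])
    then have "c \<circ> L = (*v) G \<circ> c" by (auto simp: fun_eq_iff)
    then have "matrix c ** matrix L = G ** matrix c"
      using matrix_compose_gen[OF Llin clin] matrix_compose_gen[OF clin matrix_vector_mul_linear_gen[of G]]
      by simp
    then have "det (matrix c) * det (matrix L) = det G * det (matrix c)" by (metis det_mul)
    then show ?thesis using ci G by (simp add: invertible_det_nz L_def[abs_def])
  qed
  then show ?thesis unfolding in_SL_fibre_def using gl by blast
qed

definition b0 :: "'a \<Rightarrow> complex^'n \<Rightarrow> 'e" where "b0 y v = g (y, v)"

lemma frame0: "y \<in> W0 \<Longrightarrow> fibre_frame TYPE('n) E p vadd vsmul y (b0 y)"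
proof -
  assume y: "y \<in> W0"
  have "inj (b0 y)" by (rule injI) (metis b0_def h_g[OF y] snd_conv)
  moreover have "b0 y ` UNIV = fibre E p y"
  proof
    show "b0 y ` UNIV \<subseteq> fibre E p y" using g_fib[OF y] unfolding b0_def by auto
    show "fibre E p y \<subseteq> b0 y ` UNIV"
    proof
      fix e assume e: "e \<in> fibre E p y"
      show "e \<in> b0 y ` UNIV"
        by (rule image_eqI[of _ _ "snd (h e)"]) (simp_all add: b0_def fib_g[OF y e])
    qed
  qed
  ultimately show ?thesis unfolding fibre_frame_def bij_betw_def
    by (simp add: b0_def g_add[OF y] g_smul[OF y])
qed

lemma b0_inv: "y \<in> W0 \<Longrightarrow> e \<in> fibre E p y \<Longrightarrow> the_inv_into UNIV (b0 y) e = snd (h e)"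
  by (rule the_inv_into_f_eq) (auto simp: b0_def fib_g intro!: injI, metis h_g snd_conv)

definition Mat :: "'a \<Rightarrow> ('e \<Rightarrow> 'e) \<Rightarrow> complex^'n^'n" where
  "Mat y f = matrix (\<lambda>v. the_inv_into UNIV (b0 y) (f (b0 y v)))"

lemma Mat_GL:
  assumes y: "y \<in> W0" and f: "in_GL_fibre E p vadd vsmul y f"
  shows "invertible (Mat y f)" "\<And>e. e \<in> fibre E p y \<Longrightarrow> f e = T (Mat y f) y e"
    "\<And>v. Mat y f *v v = snd (h (f (g (y, v))))"
proof -
  have fl: "fibre_linear E p vadd vsmul y f" and fb: "bij_betw f (fibre E p y) (fibre E p y)"
    using f unfolding in_GL_fibre_def by auto
  have fin: "f e \<in> fibre E p y" if "e \<in> fibre E p y" for e using fl that unfolding fibre_linear_def by auto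
  define L where "L v = the_inv_into UNIV (b0 y) (f (b0 y v))" for v
  have Llin: "Vector_Spaces.linear (*s) (*s) L" unfolding L_def by (rule frame_lin[OF frame0[OF y] fl])
  have Lv: "L v = snd (h (f (g (y, v))))" for v
    unfolding L_def using b0_inv[OF y fin[OF g_fib[OF y]]] by (simp add: b0_def)
  have MV: "Mat y f *v v = L v" for v unfolding Mat_def L_def[symmetric] using matrix_works[OF Llin] .
  then show "\<And>v. Mat y f *v v = snd (h (f (g (y, v))))" by (simp add: Lv)
  show "\<And>e. e \<in> fibre E p y \<Longrightarrow> f e = T (Mat y f) y e"
    unfolding T_def MV Lv using fib_g[OF y] fin by simp
  have "inj L"
  proof (rule injI)
    fix u v assume "L u = L v"
    then have "f (g (y, u)) = f (g (y, v))" unfolding Lv using fib_g[OF y] fin[OF g_fib[OF y]] by metis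
    then have "g (y, u) = g (y, v)" using fb g_fib[OF y] unfolding bij_betw_def inj_on_def by blast
    then show "u = v" by (metis h_g[OF y] snd_conv)
  qed
  moreover have "surj L"
  proof -
    have "w \<in> range L" for w
    proof -
      obtain e where e: "e \<in> fibre E p y" "f e = g (y, w)"
        using fb g_fib[OF y] unfolding bij_betw_def by (metis imageE)
      have "L (snd (h e)) = w" unfolding Lv using fib_g[OF y e(1)] e(2) h_g[OF y] by simp
      then show ?thesis by (metis rangeI)
    qed
    then show ?thesis by auto
  qed
  ultimately show "invertible (Mat y f)"
    unfolding invertible_eq_bij Mat_def L_def[symmetric] matrix_vector_mul(1)[OF Llin] by (simp add: bij_def)
qed

lemma Mat_SL:
  assumes y: "y \<in> W0" and f: "in_SL_fibre TYPE('n) E p vadd vsmul y f"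
  shows "det (Mat y f) = 1"
  using f frame0[OF y] unfolding in_SL_fibre_def Mat_def by blast

end

lemma Phi_cont:
  fixes H :: "real \<Rightarrow> real \<Rightarrow> complex^'n::finite^'n"
  assumes "continuous_on ({0..1}\<times>{0..1}) (\<lambda>(s,t). H s t)"
  shows "continuous_on ({0..1} \<times> {0..1} \<times> UNIV) (\<lambda>z. H (fst z) (fst (snd z)) *v snd (snd z))"
proof -
  have cH: "continuous_on ({0..1} \<times> {0..1} \<times> (UNIV::(complex^'n) set)) (\<lambda>z. H (fst z) (fst (snd z)))"
  proof (rule continuous_on_compose2[OF assms, of _ "\<lambda>z. (fst z, fst (snd z))", simplified])
    show "continuous_on ({0..1} \<times> {0..1} \<times> UNIV) (\<lambda>z::real\<times>real\<times>(complex^'n). (fst z, fst (snd z)))"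
      by (intro continuous_intros)
    show "(\<lambda>z::real\<times>real\<times>(complex^'n). (fst z, fst (snd z))) ` ({0..1} \<times> {0..1} \<times> UNIV) \<subseteq> {0..1} \<times> {0..1}"
      by auto
  qed
  show ?thesis unfolding matrix_vector_mult_def
    by (intro continuous_intros cH continuous_on_component)
qed

lemma contmap_Phi:
  fixes H :: "real \<Rightarrow> real \<Rightarrow> complex^'n::finite^'n"
  assumes H: "continuous_on ({0..1}\<times>{0..1}) (\<lambda>(s,t). H s t)"
    and a: "continuous_map Z euclideanreal a" "\<And>z. z \<in> topspace Z \<Longrightarrow> a z \<in> {0..1}"
    and b: "continuous_map Z euclideanreal b" "\<And>z. z \<in> topspace Z \<Longrightarrow> b z \<in> {0..1}"
    and c: "continuous_map Z euclidean c"
  shows "continuous_map Z euclidean (\<lambda>z. H (a z) (b z) *v c z)"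
proof -
  have "continuous_map Z (top_of_set ({0..1} \<times> {0..1} \<times> UNIV)) (\<lambda>z. (a z, b z, c z))"
  proof (rule continuous_map_into_subtopology)
    show "continuous_map Z euclidean (\<lambda>z. (a z, b z, c z))"
      using continuous_map_pairedI[OF a(1) continuous_map_pairedI[OF b(1) c]] by simp
    show "(\<lambda>z. (a z, b z, c z)) \<in> topspace Z \<rightarrow> {0..1} \<times> {0..1} \<times> UNIV" using a(2) b(2) by auto
  qed
  moreover have "continuous_map (top_of_set ({0..1} \<times> {0..1} \<times> UNIV)) euclidean
      (\<lambda>z. H (fst z) (fst (snd z)) *v snd (snd z))"
    using Phi_cont[OF H] by simp
  ultimately have "continuous_map Z euclidean ((\<lambda>z. H (fst z) (fst (snd z)) *v snd (snd z)) \<circ> (\<lambda>z. (a z, b z, c z)))"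
    by (rule continuous_map_compose)
  then show ?thesis by (simp add: o_def)
qed

lemma mv_axis: "(A::complex^'n::finite^'m::finite) $ i $ j = (A *v axis j 1) $ i"
proof -
  have "A $ i $ j = matrix (\<lambda>x. A *v x) $ i $ j" by simp
  also have "\<dots> = (A *v axis j 1) $ i" by (simp only: matrix_def vec_lambda_beta)
  finally show ?thesis .
qed

context triv begin

lemma Mat_cont:
  assumes y: "y \<in> W0" and pc: "fibre_path_cont E p y \<psi>"
    and gl: "\<forall>t\<in>{0..1}. in_GL_fibre E p vadd vsmul y (\<psi> t)"
  shows "continuous_on {0..1} (\<lambda>t. Mat y (\<psi> t))"
proof -
  have ent: "Mat y (\<psi> t) $ i $ j = snd (h (\<psi> t (g (y, axis j 1)))) $ i" if "t \<in> {0..1}" for t i j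
  proof -
    have "Mat y (\<psi> t) $ i $ j = (Mat y (\<psi> t) *v axis j 1) $ i"
      by (rule mv_axis)
    then show ?thesis using Mat_GL(3)[OF y] gl that by simp
  qed
  have ce: "continuous_on {0..1} (\<lambda>t. snd (h (\<psi> t (g (y, axis j 1)))) $ i)" for i j
  proof -
    let ?e = "g (y, axis j 1)"
    have e: "?e \<in> fibre E p y" by (rule g_fib[OF y])
    have c1: "continuous_map (top_of_set {0..1}) (prod_topology (top_of_set {0..1}) (subtopology E (fibre E p y))) (\<lambda>t::real. (t, ?e))"
    proof (intro continuous_map_pairedI)
      show "continuous_map (top_of_set {0..1}) (top_of_set {0..1}) (\<lambda>t::real. t)"
        using continuous_map_id by (simp add: id_def)
      show "continuous_map (top_of_set {0..1}) (subtopology E (fibre E p y)) (\<lambda>t::real. ?e)"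
        using e by (simp add: fibre_def)
    qed
    have c2: "continuous_map (top_of_set {0..1}) E (\<lambda>t. \<psi> t ?e)"
      using continuous_map_compose[OF c1 pc[unfolded fibre_path_cont_def]] by (simp add: o_def)
    have c3: "continuous_map (top_of_set {0..1}) (subtopology E {e \<in> topspace E. p e \<in> W0}) (\<lambda>t. \<psi> t ?e)"
    proof (rule continuous_map_into_subtopology[OF c2])
      show "(\<lambda>t. \<psi> t ?e) \<in> topspace (top_of_set {0..1}) \<rightarrow> {e \<in> topspace E. p e \<in> W0}"
        using gl e y unfolding in_GL_fibre_def fibre_linear_def by (auto simp: fibre_def Pi_iff)
    qed
    have hc: "continuous_map (subtopology E {e \<in> topspace E. p e \<in> W0}) (prod_topology (subtopology X W0) euclidean) h"
      using hom unfolding homeomorphic_maps_def by auto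
    have c4: "continuous_map (top_of_set {0..1}) euclidean (\<lambda>t. snd (h (\<psi> t ?e)))"
      using continuous_map_compose[OF continuous_map_compose[OF c3 hc] continuous_map_snd] by (simp add: o_def)
    have c5: "continuous_map euclidean (euclidean::complex topology) (\<lambda>v::complex^'n. v $ i)"
      by (simp add: continuous_on_component continuous_on_id)
    show ?thesis using continuous_map_compose[OF c4 c5] by (simp add: o_def)
  qed
  show ?thesis
  proof (rule continuous_on_eq)
    show "continuous_on {0..1} (\<lambda>t. \<chi> i j. snd (h (\<psi> t (g (y, axis j 1)))) $ i)"
      by (intro continuous_on_vec_lambda ce)
    show "(\<chi> i j. snd (h (\<psi> t (g (y, axis j 1)))) $ i) = Mat y (\<psi> t)" if "t \<in> {0..1}" for t
      using ent[OF that] by (simp add: vec_eq_iff)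
  qed
qed

end

lemma pasting3:
  assumes oA: "openin Z A" and oB: "openin Z B" and oC: "openin Z C"
    and cov: "topspace Z \<subseteq> A \<union> B \<union> C"
    and cA: "continuous_map (subtopology Z A) Y fa" and eA: "\<And>z. z \<in> topspace Z \<Longrightarrow> z \<in> A \<Longrightarrow> f z = fa z"
    and cB: "continuous_map (subtopology Z B) Y fb" and eB: "\<And>z. z \<in> topspace Z \<Longrightarrow> z \<in> B \<Longrightarrow> f z = fb z"
    and cC: "continuous_map (subtopology Z C) Y fc" and eC: "\<And>z. z \<in> topspace Z \<Longrightarrow> z \<in> C \<Longrightarrow> f z = fc z"
  shows "continuous_map Z Y f"
proof (rule pasting_lemma[where I="{A,B,C}" and T="\<lambda>i. i" and f="\<lambda>i. f"])
  show "openin Z i" if "i \<in> {A,B,C}" for i using that oA oB oC by auto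
  have "continuous_map (subtopology Z A) Y f"
    by (rule continuous_map_eq[OF cA]) (simp add: eA)
  moreover have "continuous_map (subtopology Z B) Y f"
    by (rule continuous_map_eq[OF cB]) (simp add: eB)
  moreover have "continuous_map (subtopology Z C) Y f"
    by (rule continuous_map_eq[OF cC]) (simp add: eC)
  ultimately show "continuous_map (subtopology Z i) Y f" if "i \<in> {A,B,C}" for i using that by auto
  show "f x = f x" for x by simp
  show "\<exists>j. j \<in> {A,B,C} \<and> x \<in> j \<and> f x = f x" if "x \<in> topspace Z" for x using cov that by auto
qed

lemma construction:
  fixes X :: "'a topology" and \<sigma> :: "'a \<Rightarrow> 'a" and E :: "'e topology" and p :: "'e \<Rightarrow> 'a"
    and vadd :: "'e \<Rightarrow> 'e \<Rightarrow> 'e" and vsmul :: "complex \<Rightarrow> 'e \<Rightarrow> 'e" and \<phi> :: "'e \<Rightarrow> 'e"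
    and FP :: "'a \<Rightarrow> ('e \<Rightarrow> 'e) \<Rightarrow> bool" and Q :: "complex^'n::finite^'n \<Rightarrow> bool"
    and \<psi> :: "real \<Rightarrow> 'e \<Rightarrow> 'e"
  assumes rbp: "real_bundle_pair TYPE('n) X \<sigma> E p vadd vsmul \<phi>"
    and cX: "compact_space X" and hX: "Hausdorff_space X" and cs: "continuous_map X X \<sigma>"
    and inv: "\<forall>y\<in>topspace X. \<sigma> (\<sigma> y) = y"
    and x: "x \<in> topspace X" "\<sigma> x \<noteq> x" and U: "openin X U" "x \<in> U"
    and pc: "fibre_path_cont E p x \<psi>" and gl: "\<forall>t\<in>{0..1}. in_GL_fibre E p vadd vsmul x (\<psi> t)"
    and Qhom: "\<And>M. continuous_on {0..1} M \<Longrightarrow> \<forall>t\<in>{0..1}. Q (M t) \<Longrightarrow>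
        \<exists>H::real\<Rightarrow>real\<Rightarrow>complex^'n^'n. continuous_on ({0..1}\<times>{0..1}) (\<lambda>(s,t). H s t) \<and>
           (\<forall>t\<in>{0..1}. H 1 t = M t \<and> H 0 t = mat 1) \<and> (\<forall>s\<in>{0..1}. \<forall>t\<in>{0..1}. Q (H s t))"
    and FPmodel: "\<And>W0 (h::'e \<Rightarrow> 'a \<times> (complex^'n)) g y G. triv X E p vadd vsmul W0 h g \<Longrightarrow> y \<in> W0 \<Longrightarrow> Q G \<Longrightarrow>
        FP y (\<lambda>e. g (y, G *v snd (h e)))"
    and FPconj: "\<And>y f. y \<in> topspace X \<Longrightarrow> FP (\<sigma> y) f \<Longrightarrow> FP y (\<lambda>e. \<phi> (f (\<phi> e)))"
    and FPid: "\<And>y. FP y (\<lambda>e. e)"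
    and FPcong: "\<And>y f f'. FP y f \<Longrightarrow> \<forall>e\<in>fibre E p y. f e = f' e \<Longrightarrow> FP y f'"
    and QMat: "\<And>W0 (h::'e \<Rightarrow> 'a \<times> (complex^'n)) g t. triv X E p vadd vsmul W0 h g \<Longrightarrow> x \<in> W0 \<Longrightarrow> t \<in> {0..1} \<Longrightarrow>
        Q (matrix (\<lambda>v. the_inv_into UNIV (\<lambda>v. g (x, v)) (\<psi> t (g (x, v)))))"
  shows "\<exists>\<Psi>. bundle_path_cont E \<Psi> \<and>
     (\<forall>t\<in>{0..1}. continuous_map E E (\<Psi> t) \<and> (\<forall>e\<in>topspace E. \<Psi> t (\<phi> e) = \<phi> (\<Psi> t e)) \<and>
        (\<forall>y\<in>topspace X. FP y (\<Psi> t))) \<and>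
     (\<forall>t\<in>{0..1}. \<forall>e\<in>fibre E p x. \<Psi> t e = \<psi> t e) \<and>
     (\<forall>t\<in>{0..1}. \<forall>e\<in>topspace E. p e \<notin> U \<union> \<sigma> ` U \<longrightarrow> \<Psi> t e = e)"
proof -
  have cvb: "complex_vector_bundle TYPE('n) X E p vadd vsmul" and cphi: "continuous_map E E \<phi>"
    and phip: "\<And>e. e \<in> topspace E \<Longrightarrow> p (\<phi> e) = \<sigma> (p e)"
    and phiinv: "\<And>e. e \<in> topspace E \<Longrightarrow> \<phi> (\<phi> e) = e"
    using rbp unfolding real_bundle_pair_def by auto
  have phitop: "\<And>e. e \<in> topspace E \<Longrightarrow> \<phi> e \<in> topspace E"
    using cphi continuous_map_image_subset_topspace by blast
  have cp: "continuous_map E X p"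
    and add_top: "\<And>e1 e2. e1 \<in> topspace E \<Longrightarrow> e2 \<in> topspace E \<Longrightarrow> p e1 = p e2 \<Longrightarrow>
                   vadd e1 e2 \<in> topspace E \<and> p (vadd e1 e2) = p e1"
    and smul_top: "\<And>c e. e \<in> topspace E \<Longrightarrow> vsmul c e \<in> topspace E \<and> p (vsmul c e) = p e"
    using cvb unfolding complex_vector_bundle_def by auto
  have stop: "\<And>y. y \<in> topspace X \<Longrightarrow> \<sigma> y \<in> topspace X"
    using cs continuous_map_image_subset_topspace by blast
  have ptop: "\<And>e. e \<in> topspace E \<Longrightarrow> p e \<in> topspace X"
    using cp continuous_map_image_subset_topspace by blast
  obtain W0 and h :: "'e \<Rightarrow> 'a \<times> (complex^'n)" where W0: "openin X W0" "x \<in> W0"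
    and hm: "homeomorphic_map (subtopology E {e \<in> topspace E. p e \<in> W0})
                         (prod_topology (subtopology X W0) euclidean) h"
    and hfst: "\<forall>e\<in>topspace E. p e \<in> W0 \<longrightarrow> fst (h e) = p e"
    and hadd: "\<forall>e1\<in>topspace E. \<forall>e2\<in>topspace E. p e1 \<in> W0 \<and> p e1 = p e2 \<longrightarrow>
            h (vadd e1 e2) = (p e1, snd (h e1) + snd (h e2))"
    and hsmul: "\<forall>c. \<forall>e\<in>topspace E. p e \<in> W0 \<longrightarrow> h (vsmul c e) = (p e, c *s snd (h e))"
  proof -
    have "\<forall>x\<in>topspace X. \<exists>W (h :: 'e \<Rightarrow> 'a \<times> (complex^'n)). openin X W \<and> x \<in> W \<and>
        homeomorphic_map (subtopology E {e \<in> topspace E. p e \<in> W})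
                         (prod_topology (subtopology X W) euclidean) h \<and>
        (\<forall>e\<in>topspace E. p e \<in> W \<longrightarrow> fst (h e) = p e) \<and>
        (\<forall>e1\<in>topspace E. \<forall>e2\<in>topspace E. p e1 \<in> W \<and> p e1 = p e2 \<longrightarrow>
            h (vadd e1 e2) = (p e1, snd (h e1) + snd (h e2))) \<and>
        (\<forall>c. \<forall>e\<in>topspace E. p e \<in> W \<longrightarrow> h (vsmul c e) = (p e, c *s snd (h e)))"
      using cvb[unfolded complex_vector_bundle_def] by (rule conjunct2[THEN conjunct2[THEN conjunct2]])
    from this[rule_format, OF x(1)] show ?thesis
      by (elim exE conjE) (rule that; assumption)
  qed
  obtain g where hg: "homeomorphic_maps (subtopology E {e \<in> topspace E. p e \<in> W0})
                         (prod_topology (subtopology X W0) euclidean) h g"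
    using hm homeomorphic_map_maps by blast
  have trv: "triv X E p vadd vsmul W0 h g"
  proof (unfold_locales)
    show "homeomorphic_maps (subtopology E {e \<in> topspace E. p e \<in> W0})
                         (prod_topology (subtopology X W0) euclidean) h g" by (fact hg)
    show "W0 \<subseteq> topspace X" by (rule openin_subset[OF W0(1)])
    show "\<And>e. e \<in> topspace E \<Longrightarrow> p e \<in> W0 \<Longrightarrow> fst (h e) = p e" using hfst by blast
    show "\<And>e1 e2. e1 \<in> topspace E \<Longrightarrow> e2 \<in> topspace E \<Longrightarrow> p e1 \<in> W0 \<Longrightarrow> p e1 = p e2 \<Longrightarrow>
            h (vadd e1 e2) = (p e1, snd (h e1) + snd (h e2))" using hadd by blast
    show "\<And>c e. e \<in> topspace E \<Longrightarrow> p e \<in> W0 \<Longrightarrow> h (vsmul c e) = (p e, c *s snd (h e))"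
      using hsmul by blast
    show "\<And>e1 e2. e1 \<in> topspace E \<Longrightarrow> e2 \<in> topspace E \<Longrightarrow> p e1 = p e2 \<Longrightarrow>
                   vadd e1 e2 \<in> topspace E \<and> p (vadd e1 e2) = p e1" by (rule add_top)
    show "\<And>c e. e \<in> topspace E \<Longrightarrow> vsmul c e \<in> topspace E \<and> p (vsmul c e) = p e" by (rule smul_top)
  qed
  interpret tr: triv X E p vadd vsmul W0 h g by (rule trv)
  define M where "M t = tr.Mat x (\<psi> t)" for t
  have cM: "continuous_on {0..1} M" unfolding M_def by (rule tr.Mat_cont[OF W0(2) pc gl])
  have QM: "\<forall>t\<in>{0..1}. Q (M t)"
  proof
    fix t :: real assume t: "t \<in> {0..1}"
    have "M t = matrix (\<lambda>v. the_inv_into UNIV (\<lambda>v. g (x, v)) (\<psi> t (g (x, v))))"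
      by (simp add: M_def tr.Mat_def tr.b0_def[abs_def])
    then show "Q (M t)" using QMat[OF trv W0(2) t] by simp
  qed
  obtain H :: "real\<Rightarrow>real\<Rightarrow>complex^'n^'n" where Hc: "continuous_on ({0..1}\<times>{0..1}) (\<lambda>(s,t). H s t)"
     and Hend: "\<forall>t\<in>{0..1}. H 1 t = M t \<and> H 0 t = mat 1" and HQ: "\<forall>s\<in>{0..1}. \<forall>t\<in>{0..1}. Q (H s t)"
    using Qhom[OF cM QM] by blast
  have xU0: "x \<in> W0 \<inter> U" using W0 U by auto
  obtain W V and \<rho> :: "'a \<Rightarrow> real" where oW: "openin X W" and xW: "x \<in> W" and WU0: "W \<subseteq> W0 \<inter> U"
    and sW: "\<forall>y\<in>W. \<sigma> y \<notin> W" and oV: "openin X V" and xV: "x \<in> V" and clV: "X closure_of V \<subseteq> W"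
    and rc: "continuous_map X (top_of_set {0..1}) \<rho>" and rx: "\<rho> x = 1" and r0: "\<forall>y\<in>topspace X - V. \<rho> y = 0"
    using cutoff_exists[OF cX hX cs inv x openin_Int[OF W0(1) U(1)] xU0] by blast
  have Wtop: "W \<subseteq> topspace X" using openin_subset[OF oW] .
  have VclV: "V \<subseteq> X closure_of V" using closure_of_subset openin_subset[OF oV] by blast
  have r01: "\<rho> y \<in> {0..1}" if "y \<in> topspace X" for y
    using rc that continuous_map_image_subset_topspace by fastforce
  define F where "F t e = g (p e, H (\<rho> (p e)) t *v snd (h e))" for t e
  define \<Psi> where "\<Psi> t e = (if p e \<in> W then F t e else if \<sigma> (p e) \<in> W then \<phi> (F t (\<phi> e)) else e)" for t e
  have Fin: "F t e \<in> topspace E \<and> p (F t e) = p e" if "e \<in> topspace E" "p e \<in> W" for t e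
    using tr.g_in[of "p e"] that WU0 unfolding F_def by auto
  have Fid: "F t e = e" if "e \<in> topspace E" "p e \<in> W" "p e \<notin> V" "t \<in> {0..1}" for t e
  proof -
    have "\<rho> (p e) = 0" using r0 that ptop by auto
    then have "F t e = g (p e, snd (h e))" using Hend that by (simp add: F_def)
    then show ?thesis using tr.fib_g[of "p e" e] that WU0 by (auto simp: fibre_def)
  qed
  have FT: "F t e = tr.T (H (\<rho> y) t) y e" if "e \<in> fibre E p y" for t e y
    using that by (simp add: F_def tr.T_def fibre_def)
  have Tfun: "tr.T G y = (\<lambda>e. g (y, G *v snd (h e)))" for G y by (simp add: tr.T_def fun_eq_iff)
  have FPall: "FP y (\<Psi> t)" if t: "t \<in> {0..1}" and y: "y \<in> topspace X" for t y
  proof (cases "y \<in> W")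
    case True
    have "FP y (tr.T (H (\<rho> y) t) y)"
      unfolding Tfun by (rule FPmodel[OF trv]) (use True WU0 HQ r01[OF y] t in auto)
    moreover have "\<forall>e\<in>fibre E p y. tr.T (H (\<rho> y) t) y e = \<Psi> t e"
      using True FT by (auto simp: \<Psi>_def fibre_def)
    ultimately show ?thesis by (rule FPcong)
  next
    case False
    show ?thesis
    proof (cases "\<sigma> y \<in> W")
      case True
      have sy: "\<sigma> y \<in> topspace X" using True Wtop by auto
      have "FP (\<sigma> y) (tr.T (H (\<rho> (\<sigma> y)) t) (\<sigma> y))"
        unfolding Tfun by (rule FPmodel[OF trv]) (use True WU0 HQ r01[OF sy] t in auto)
      then have "FP y (\<lambda>e. \<phi> (tr.T (H (\<rho> (\<sigma> y)) t) (\<sigma> y) (\<phi> e)))" by (rule FPconj[OF y])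
      moreover have "\<forall>e\<in>fibre E p y. \<phi> (tr.T (H (\<rho> (\<sigma> y)) t) (\<sigma> y) (\<phi> e)) = \<Psi> t e"
      proof
        fix e assume e: "e \<in> fibre E p y"
        then have "\<phi> e \<in> fibre E p (\<sigma> y)" using phitop phip by (auto simp: fibre_def)
        then show "\<phi> (tr.T (H (\<rho> (\<sigma> y)) t) (\<sigma> y) (\<phi> e)) = \<Psi> t e"
          using e False True FT[of "\<phi> e" "\<sigma> y" t] by (auto simp: \<Psi>_def fibre_def)
      qed
      ultimately show ?thesis by (rule FPcong)
    next
      case False2: False
      have "\<forall>e\<in>fibre E p y. e = \<Psi> t e" using False False2 by (auto simp: \<Psi>_def fibre_def)
      then show ?thesis using FPid FPcong by blast
    qed
  qed
  define Z where "Z = prod_topology (top_of_set {0..1::real}) E"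
  have tZ: "topspace Z = {0..1} \<times> topspace E" by (simp add: Z_def)
  define O1 where "O1 = {0..1::real} \<times> {e \<in> topspace E. p e \<in> W}"
  define O2 where "O2 = {0..1::real} \<times> {e \<in> topspace E. \<sigma> (p e) \<in> W}"
  define O3 where "O3 = {0..1::real} \<times> {e \<in> topspace E. p e \<in> topspace X - X closure_of V \<and> \<sigma> (p e) \<in> topspace X - X closure_of V}"
  have csp: "continuous_map E X (\<lambda>e. \<sigma> (p e))" using continuous_map_compose[OF cp cs] by (simp add: o_def)
  have oprod: "openin Z ({0..1} \<times> S)" if "openin E S" for S
    unfolding Z_def using that by (simp add: openin_prod_Times_iff)
  have oO1: "openin Z O1" unfolding O1_def by (rule oprod[OF openin_continuous_map_preimage[OF cp oW]])
  have oO2: "openin Z O2" unfolding O2_def by (rule oprod[OF openin_continuous_map_preimage[OF csp oW]])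
  have oO3: "openin Z O3"
  proof -
    have o: "openin X (topspace X - X closure_of V)" by (simp add: openin_diff closedin_closure_of)
    have "{e \<in> topspace E. p e \<in> topspace X - X closure_of V \<and> \<sigma> (p e) \<in> topspace X - X closure_of V}
       = {e \<in> topspace E. p e \<in> topspace X - X closure_of V} \<inter> {e \<in> topspace E. \<sigma> (p e) \<in> topspace X - X closure_of V}"
      by auto
    moreover have "openin E ({e \<in> topspace E. p e \<in> topspace X - X closure_of V} \<inter> {e \<in> topspace E. \<sigma> (p e) \<in> topspace X - X closure_of V})"
      by (rule openin_Int[OF openin_continuous_map_preimage[OF cp o] openin_continuous_map_preimage[OF csp o]])
    ultimately show ?thesis unfolding O3_def using oprod by simp
  qed
  have cov: "topspace Z \<subseteq> O1 \<union> O2 \<union> O3"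
    using clV ptop inv stop by (auto simp: tZ O1_def O2_def O3_def)
  have fstc: "continuous_map (subtopology Z S) euclideanreal fst" for S
    unfolding Z_def
    by (rule continuous_map_from_subtopology, rule continuous_map_into_fulltopology[OF continuous_map_fst])
  have sndc: "continuous_map (subtopology Z S) E snd" for S
    unfolding Z_def by (rule continuous_map_from_subtopology, rule continuous_map_snd)
  have hc: "continuous_map (subtopology E {e \<in> topspace E. p e \<in> W0}) (prod_topology (subtopology X W0) euclidean) h"
    and gc0: "continuous_map (prod_topology (subtopology X W0) euclidean) (subtopology E {e \<in> topspace E. p e \<in> W0}) g"
    using hg unfolding homeomorphic_maps_def by auto
  have gc: "continuous_map (prod_topology (subtopology X W0) euclidean) E g"
    using continuous_map_into_fulltopology[OF gc0] .
  have rce: "continuous_map X euclideanreal \<rho>" using continuous_map_into_fulltopology[OF rc] .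
  have tO1: "topspace (subtopology Z O1) = O1" by (rule topspace_subtopology_subset[OF openin_subset[OF oO1]])
  have tO2: "topspace (subtopology Z O2) = O2" by (rule topspace_subtopology_subset[OF openin_subset[OF oO2]])
  have f1c: "continuous_map (subtopology Z O1) E (\<lambda>z. F (fst z) (snd z))"
  proof -
    let ?Z1 = "subtopology Z O1"
    have pc1: "continuous_map ?Z1 X (\<lambda>z. p (snd z))"
      using continuous_map_compose[OF sndc cp] by (simp add: o_def)
    have pW0: "continuous_map ?Z1 (subtopology X W0) (\<lambda>z. p (snd z))"
      by (rule continuous_map_into_subtopology[OF pc1]) (use WU0 tO1 in \<open>auto simp: O1_def\<close>)
    have sW0: "continuous_map ?Z1 (subtopology E {e \<in> topspace E. p e \<in> W0}) snd"
      by (rule continuous_map_into_subtopology[OF sndc]) (use WU0 tO1 in \<open>auto simp: O1_def\<close>)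
    have hsc: "continuous_map ?Z1 euclidean (\<lambda>z. snd (h (snd z)))"
      using continuous_map_compose[OF continuous_map_compose[OF sW0 hc] continuous_map_snd] by (simp add: o_def)
    have rpc: "continuous_map ?Z1 euclideanreal (\<lambda>z. \<rho> (p (snd z)))"
      using continuous_map_compose[OF pc1 rce] by (simp add: o_def)
    have Phic: "continuous_map ?Z1 euclidean (\<lambda>z. H (\<rho> (p (snd z))) (fst z) *v snd (h (snd z)))"
    proof (rule contmap_Phi[OF Hc rpc _ fstc _ hsc])
      show "\<rho> (p (snd z)) \<in> {0..1}" if "z \<in> topspace ?Z1" for z
        using that tO1 r01 ptop by (auto simp: O1_def)
      show "fst z \<in> {0..1}" if "z \<in> topspace ?Z1" for z
        using that tO1 by (auto simp: O1_def)
    qed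
    have "continuous_map ?Z1 (prod_topology (subtopology X W0) euclidean)
        (\<lambda>z. (p (snd z), H (\<rho> (p (snd z))) (fst z) *v snd (h (snd z))))"
      by (rule continuous_map_pairedI[OF pW0 Phic])
    from continuous_map_compose[OF this gc] show ?thesis by (simp add: o_def F_def)
  qed
  have f2c: "continuous_map (subtopology Z O2) E (\<lambda>z. \<phi> (F (fst z) (\<phi> (snd z))))"
  proof -
    have m0: "continuous_map (subtopology Z O2) Z (\<lambda>z. (fst z, \<phi> (snd z)))"
      unfolding Z_def
    proof (rule continuous_map_pairedI)
      show "continuous_map (subtopology (prod_topology (top_of_set {0..1}) E) O2) (top_of_set {0..1}) fst"
        by (rule continuous_map_from_subtopology, rule continuous_map_fst)
      show "continuous_map (subtopology (prod_topology (top_of_set {0..1}) E) O2) E (\<lambda>z. \<phi> (snd z))"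
        using continuous_map_compose[OF sndc[unfolded Z_def] cphi] by (simp add: o_def)
    qed
    have m: "continuous_map (subtopology Z O2) (subtopology Z O1) (\<lambda>z. (fst z, \<phi> (snd z)))"
      by (rule continuous_map_into_subtopology[OF m0]) (use tO2 phitop phip in \<open>auto simp: O1_def O2_def\<close>)
    from continuous_map_compose[OF continuous_map_compose[OF m f1c] cphi] show ?thesis by (simp add: o_def)
  qed
  have f3c: "continuous_map (subtopology Z O3) E snd" by (rule sndc)
  have jc: "continuous_map Z E (\<lambda>z. \<Psi> (fst z) (snd z))"
  proof (rule pasting3[OF oO1 oO2 oO3 cov f1c _ f2c _ f3c])
    show "\<Psi> (fst z) (snd z) = F (fst z) (snd z)" if "z \<in> topspace Z" "z \<in> O1" for z
      using that by (auto simp: O1_def \<Psi>_def)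
    show "\<Psi> (fst z) (snd z) = \<phi> (F (fst z) (\<phi> (snd z)))" if "z \<in> topspace Z" "z \<in> O2" for z
      using that sW by (auto simp: O2_def \<Psi>_def)
    show "\<Psi> (fst z) (snd z) = snd z" if z: "z \<in> topspace Z" "z \<in> O3" for z
    proof -
      define t where "t = fst z"
      define e where "e = snd z"
      have ze: "z = (t, e)" by (simp add: t_def e_def)
      have te: "t \<in> {0..1}" "e \<in> topspace E" "p e \<notin> X closure_of V" "\<sigma> (p e) \<notin> X closure_of V"
        using z ze by (auto simp: O3_def)
      have nV: "p e \<notin> V" "\<sigma> (p e) \<notin> V" using te VclV by auto
      show ?thesis
      proof (cases "p e \<in> W")
        case True then show ?thesis using Fid[OF te(2) True nV(1) te(1)] ze by (simp add: \<Psi>_def)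
      next
        case False
        show ?thesis
        proof (cases "\<sigma> (p e) \<in> W")
          case True
          have "F t (\<phi> e) = \<phi> e" using Fid[of "\<phi> e" t] phitop phip True nV te by auto
          then show ?thesis using False True ze phiinv te by (simp add: \<Psi>_def)
        qed (use False ze in \<open>simp add: \<Psi>_def\<close>)
      qed
    qed
  qed
  have bpc: "bundle_path_cont E \<Psi>"
  proof -
    have "(\<lambda>z. \<Psi> (fst z) (snd z)) = (\<lambda>(t, e). \<Psi> t e)" by (simp add: fun_eq_iff split_beta)
    then show ?thesis using jc unfolding bundle_path_cont_def Z_def by simp
  qed
  have ct: "continuous_map E E (\<Psi> t)" if t: "t \<in> {0..1}" for t
  proof -
    have "continuous_map E Z (\<lambda>e. (t, e))"
      unfolding Z_def by (intro continuous_map_pairedI) (use t in auto)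
    from continuous_map_compose[OF this jc] show ?thesis by (simp add: o_def)
  qed
  have comm: "\<Psi> t (\<phi> e) = \<phi> (\<Psi> t e)" if e: "e \<in> topspace E" for t e
  proof -
    have pe: "p e \<in> topspace X" using ptop e by auto
    have a: "p (\<phi> e) = \<sigma> (p e)" "\<sigma> (p (\<phi> e)) = p e" using phip e inv pe by auto
    show ?thesis
    proof (cases "p e \<in> W")
      case True
      then have "\<sigma> (p e) \<notin> W" using sW by auto
      then show ?thesis using True a phiinv e by (simp add: \<Psi>_def)
    next
      case False
      show ?thesis
      proof (cases "\<sigma> (p e) \<in> W")
        case True
        have "F t (\<phi> e) \<in> topspace E" using Fin[of "\<phi> e" t] phitop e a True by auto
        then show ?thesis using False True a phiinv by (simp add: \<Psi>_def)
      qed (use False a in \<open>simp add: \<Psi>_def\<close>)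
    qed
  qed
  have agree: "\<Psi> t e = \<psi> t e" if t: "t \<in> {0..1}" and e: "e \<in> fibre E p x" for t e
  proof -
    have pe: "p e = x" using e by (simp add: fibre_def)
    have "\<Psi> t e = tr.T (M t) x e"
      using pe xW rx Hend t by (simp add: \<Psi>_def F_def tr.T_def)
    also have "\<dots> = \<psi> t e"
    proof -
      have "in_GL_fibre E p vadd vsmul x (\<psi> t)" using gl t by auto
      from tr.Mat_GL(2)[OF W0(2) this e] show ?thesis by (simp add: M_def)
    qed
    finally show ?thesis .
  qed
  have outside: "\<Psi> t e = e" if "e \<in> topspace E" "p e \<notin> U \<union> \<sigma> ` U" for t e
  proof -
    have "p e \<notin> W" using that WU0 by auto
    moreover have "\<sigma> (p e) \<notin> W"
    proof
      assume "\<sigma> (p e) \<in> W"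
      then have "\<sigma> (\<sigma> (p e)) \<in> \<sigma> ` U" using WU0 by auto
      then show False using that inv ptop by auto
    qed
    ultimately show ?thesis by (simp add: \<Psi>_def)
  qed
  have A: "\<forall>t\<in>{0..1}. continuous_map E E (\<Psi> t) \<and> (\<forall>e\<in>topspace E. \<Psi> t (\<phi> e) = \<phi> (\<Psi> t e)) \<and>
        (\<forall>y\<in>topspace X. FP y (\<Psi> t))" by (simp add: ct comm FPall)
  have B: "\<forall>t\<in>{0..1}. \<forall>e\<in>fibre E p x. \<Psi> t e = \<psi> t e" by (simp add: agree)
  have C: "\<forall>t\<in>{0..1}. \<forall>e\<in>topspace E. p e \<notin> U \<union> \<sigma> ` U \<longrightarrow> \<Psi> t e = e" by (simp add: outside)
  show ?thesis by (rule exI[of _ \<Psi>]) (intro conjI bpc A B C)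
qed

lemma rbp_fib_of:
  assumes "real_bundle_pair n X \<sigma> E p vadd vsmul \<phi>"
  shows "rbp_fib E p vadd vsmul \<phi> \<sigma>"
proof -
  have cvb: "complex_vector_bundle n X E p vadd vsmul" and cphi: "continuous_map E E \<phi>"
    and r: "\<forall>e\<in>topspace E. p (\<phi> e) = \<sigma> (p e)" "\<forall>e\<in>topspace E. \<phi> (\<phi> e) = e"
     "\<forall>e1\<in>topspace E. \<forall>e2\<in>topspace E. p e1 = p e2 \<longrightarrow> \<phi> (vadd e1 e2) = vadd (\<phi> e1) (\<phi> e2)"
     "\<forall>c. \<forall>e\<in>topspace E. \<phi> (vsmul c e) = vsmul (cnj c) (\<phi> e)"
    using assms unfolding real_bundle_pair_def by auto
  have v: "\<forall>e1\<in>topspace E. \<forall>e2\<in>topspace E. p e1 = p e2 \<longrightarrow>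
         vadd e1 e2 \<in> topspace E \<and> p (vadd e1 e2) = p e1"
     "\<forall>c. \<forall>e\<in>topspace E. vsmul c e \<in> topspace E \<and> p (vsmul c e) = p e"
    using cvb unfolding complex_vector_bundle_def by auto
  have pt: "\<And>e. e \<in> topspace E \<Longrightarrow> \<phi> e \<in> topspace E"
    using cphi continuous_map_image_subset_topspace by blast
  show ?thesis
  proof
    show "\<And>e. e \<in> topspace E \<Longrightarrow> \<phi> e \<in> topspace E" by (rule pt)
    show "\<And>e. e \<in> topspace E \<Longrightarrow> p (\<phi> e) = \<sigma> (p e)" using r(1) by blast
    show "\<And>e. e \<in> topspace E \<Longrightarrow> \<phi> (\<phi> e) = e" using r(2) by blast
    show "\<And>e1 e2. e1 \<in> topspace E \<Longrightarrow> e2 \<in> topspace E \<Longrightarrow> p e1 = p e2 \<Longrightarrow>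
                   \<phi> (vadd e1 e2) = vadd (\<phi> e1) (\<phi> e2)" using r(3) by blast
    show "\<And>c e. e \<in> topspace E \<Longrightarrow> \<phi> (vsmul c e) = vsmul (cnj c) (\<phi> e)" using r(4) by blast
    show "\<And>e1 e2. e1 \<in> topspace E \<Longrightarrow> e2 \<in> topspace E \<Longrightarrow> p e1 = p e2 \<Longrightarrow>
                   vadd e1 e2 \<in> topspace E \<and> p (vadd e1 e2) = p e1" using v(1) by blast
    show "\<And>c e. e \<in> topspace E \<Longrightarrow> vsmul c e \<in> topspace E \<and> p (vsmul c e) = p e" using v(2) by blast
  qed
qed

theorem lemma3p4:
  fixes X :: "'a topology" and \<sigma> :: "'a \<Rightarrow> 'a"
    and E :: "'e topology" and p :: "'e \<Rightarrow> 'a"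
    and vadd :: "'e \<Rightarrow> 'e \<Rightarrow> 'e" and vsmul :: "complex \<Rightarrow> 'e \<Rightarrow> 'e" and \<phi> :: "'e \<Rightarrow> 'e"
  assumes "symmetric_surface X \<sigma>"
    and "real_bundle_pair TYPE('n::finite) X \<sigma> E p vadd vsmul \<phi>"
  shows "(\<forall>x U \<psi>. x \<in> topspace X - fixed_locus X \<sigma> \<and> openin X U \<and> x \<in> U \<and>
             SL_fibre_path TYPE('n) E p vadd vsmul x \<psi> \<longrightarrow>
           (\<exists>\<Psi>. SL_bundle_path TYPE('n) X E p vadd vsmul \<phi> \<Psi> \<and>
                 (\<forall>t\<in>{0..1}. \<forall>e\<in>fibre E p x. \<Psi> t e = \<psi> t e) \<and>
                 (\<forall>t\<in>{0..1}. \<forall>e\<in>topspace E. p e \<notin> U \<union> \<sigma> ` U \<longrightarrow> \<Psi> t e = e)))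
       \<and> (\<forall>x U \<psi>. x \<in> topspace X - fixed_locus X \<sigma> \<and> openin X U \<and> x \<in> U \<and>
             GL_fibre_path E p vadd vsmul x \<psi> \<longrightarrow>
           (\<exists>\<Psi>. GL_bundle_path X E p vadd vsmul \<phi> \<Psi> \<and>
                 (\<forall>t\<in>{0..1}. \<forall>e\<in>fibre E p x. \<Psi> t e = \<psi> t e) \<and>
                 (\<forall>t\<in>{0..1}. \<forall>e\<in>topspace E. p e \<notin> U \<union> \<sigma> ` U \<longrightarrow> \<Psi> t e = e)))"
proof -
  note rbp = assms(2)
  have ss: "compact_space X" "Hausdorff_space X" "continuous_map X X \<sigma>" "\<forall>y\<in>topspace X. \<sigma> (\<sigma> y) = y"
    using assms(1) unfolding symmetric_surface_def nodal_surface_def by auto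
  interpret rf: rbp_fib E p vadd vsmul \<phi> \<sigma> by (rule rbp_fib_of[OF rbp])
  have SLpart: "\<exists>\<Psi>. SL_bundle_path TYPE('n) X E p vadd vsmul \<phi> \<Psi> \<and>
                 (\<forall>t\<in>{0..1}. \<forall>e\<in>fibre E p x. \<Psi> t e = \<psi> t e) \<and>
                 (\<forall>t\<in>{0..1}. \<forall>e\<in>topspace E. p e \<notin> U \<union> \<sigma> ` U \<longrightarrow> \<Psi> t e = e)"
    if x: "x \<in> topspace X - fixed_locus X \<sigma>" and U: "openin X U" "x \<in> U"
      and sp: "SL_fibre_path TYPE('n) E p vadd vsmul x \<psi>" for x U \<psi>
  proof -
    have x': "x \<in> topspace X" "\<sigma> x \<noteq> x" using x by (auto simp: fixed_locus_def)
    have pc: "fibre_path_cont E p x \<psi>" and sl: "\<forall>t\<in>{0..1}. in_SL_fibre TYPE('n) E p vadd vsmul x (\<psi> t)"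
      using sp unfolding SL_fibre_path_def by auto
    have gl: "\<forall>t\<in>{0..1}. in_GL_fibre E p vadd vsmul x (\<psi> t)" using sl unfolding in_SL_fibre_def by auto
    obtain \<Psi> where P: "bundle_path_cont E \<Psi>"
      "\<forall>t\<in>{0..1}. continuous_map E E (\<Psi> t) \<and> (\<forall>e\<in>topspace E. \<Psi> t (\<phi> e) = \<phi> (\<Psi> t e)) \<and>
        (\<forall>y\<in>topspace X. in_SL_fibre TYPE('n) E p vadd vsmul y (\<Psi> t))"
      "\<forall>t\<in>{0..1}. \<forall>e\<in>fibre E p x. \<Psi> t e = \<psi> t e"
      "\<forall>t\<in>{0..1}. \<forall>e\<in>topspace E. p e \<notin> U \<union> \<sigma> ` U \<longrightarrow> \<Psi> t e = e"
    proof (atomize_elim, rule construction[OF rbp ss x' U pc gl, where Q="\<lambda>G. det G = 1"])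
      show "\<exists>H::real\<Rightarrow>real\<Rightarrow>complex^'n^'n. continuous_on ({0..1}\<times>{0..1}) (\<lambda>(s,t). H s t) \<and>
           (\<forall>t\<in>{0..1}. H 1 t = M t \<and> H 0 t = mat 1) \<and> (\<forall>s\<in>{0..1}. \<forall>t\<in>{0..1}. det (H s t) = 1)"
        if "continuous_on {0..1} M" "\<forall>t\<in>{0..1}. det (M t) = 1" for M
        using SL_homotopy[OF that] .
      show "in_SL_fibre TYPE('n) E p vadd vsmul y (\<lambda>e. g (y, G *v snd (h e)))"
        if trv: "triv X E p vadd vsmul W0 h g" and y: "y \<in> W0" and G: "det G = 1"
        for W0 and h :: "'e \<Rightarrow> 'a \<times> (complex^'n)" and g y G
      proof -
        interpret tr: triv X E p vadd vsmul W0 h g by (rule trv)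
        have "tr.T G y = (\<lambda>e. g (y, G *v snd (h e)))" by (simp add: tr.T_def fun_eq_iff)
        then show ?thesis using tr.model_SL[OF y G] by simp
      qed
      show "in_SL_fibre TYPE('n) E p vadd vsmul y (\<lambda>e. \<phi> (f (\<phi> e)))"
        if "y \<in> topspace X" "in_SL_fibre TYPE('n) E p vadd vsmul (\<sigma> y) f" for y f
      proof -
        have "\<sigma> (\<sigma> y) = y" using ss(4) that(1) by blast
        then show ?thesis by (rule rf.conj_SL[OF _ that(2)])
      qed
      show "in_SL_fibre TYPE('n) E p vadd vsmul y (\<lambda>e. e)" for y by (rule in_SL_fibre_id)
      show "in_SL_fibre TYPE('n) E p vadd vsmul y f'"
        if "in_SL_fibre TYPE('n) E p vadd vsmul y f" "\<forall>e\<in>fibre E p y. f e = f' e" for y f f'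
        by (rule rf.in_SL_fibre_cong[OF that])
      show "det (matrix (\<lambda>v. the_inv_into UNIV (\<lambda>v. g (x, v)) (\<psi> t (g (x, v))))) = 1"
        if trv: "triv X E p vadd vsmul W0 h g" and xW: "x \<in> W0" and t: "t \<in> {0..1}"
        for W0 and h :: "'e \<Rightarrow> 'a \<times> (complex^'n)" and g t
      proof -
        interpret tr: triv X E p vadd vsmul W0 h g by (rule trv)
        have "in_SL_fibre TYPE('n) E p vadd vsmul x (\<psi> t)" using sl t by blast
        from tr.Mat_SL[OF xW this] have "det (tr.Mat x (\<psi> t)) = 1" .
        then show ?thesis by (simp add: tr.Mat_def tr.b0_def[abs_def])
      qed
    qed
    have "SL_bundle_path TYPE('n) X E p vadd vsmul \<phi> \<Psi>"
    proof -
      have "in_SL_bundle TYPE('n) X E p vadd vsmul \<phi> (\<Psi> t)" if t: "t \<in> {0..1}" for t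
      proof -
        have a: "continuous_map E E (\<Psi> t)" "\<forall>e\<in>topspace E. \<Psi> t (\<phi> e) = \<phi> (\<Psi> t e)"
          "\<forall>y\<in>topspace X. in_SL_fibre TYPE('n) E p vadd vsmul y (\<Psi> t)" using P(2) t by auto
        have "\<forall>y\<in>topspace X. in_GL_fibre E p vadd vsmul y (\<Psi> t)"
          using a(3) unfolding in_SL_fibre_def by blast
        then show ?thesis using a unfolding in_SL_bundle_def in_GL_bundle_def by blast
      qed
      then show ?thesis using P(1) unfolding SL_bundle_path_def by blast
    qed
    then show ?thesis using P(3,4) by blast
  qed
  have GLpart: "\<exists>\<Psi>. GL_bundle_path X E p vadd vsmul \<phi> \<Psi> \<and>
                 (\<forall>t\<in>{0..1}. \<forall>e\<in>fibre E p x. \<Psi> t e = \<psi> t e) \<and>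
                 (\<forall>t\<in>{0..1}. \<forall>e\<in>topspace E. p e \<notin> U \<union> \<sigma> ` U \<longrightarrow> \<Psi> t e = e)"
    if x: "x \<in> topspace X - fixed_locus X \<sigma>" and U: "openin X U" "x \<in> U"
      and sp: "GL_fibre_path E p vadd vsmul x \<psi>" for x U \<psi>
  proof -
    have x': "x \<in> topspace X" "\<sigma> x \<noteq> x" using x by (auto simp: fixed_locus_def)
    have pc: "fibre_path_cont E p x \<psi>" and gl: "\<forall>t\<in>{0..1}. in_GL_fibre E p vadd vsmul x (\<psi> t)"
      using sp unfolding GL_fibre_path_def by auto
    obtain \<Psi> where P: "bundle_path_cont E \<Psi>"
      "\<forall>t\<in>{0..1}. continuous_map E E (\<Psi> t) \<and> (\<forall>e\<in>topspace E. \<Psi> t (\<phi> e) = \<phi> (\<Psi> t e)) \<and>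
        (\<forall>y\<in>topspace X. in_GL_fibre E p vadd vsmul y (\<Psi> t))"
      "\<forall>t\<in>{0..1}. \<forall>e\<in>fibre E p x. \<Psi> t e = \<psi> t e"
      "\<forall>t\<in>{0..1}. \<forall>e\<in>topspace E. p e \<notin> U \<union> \<sigma> ` U \<longrightarrow> \<Psi> t e = e"
    proof (atomize_elim, rule construction[OF rbp ss x' U pc gl, where Q="invertible :: complex^'n^'n \<Rightarrow> bool"])
      show "\<exists>H::real\<Rightarrow>real\<Rightarrow>complex^'n^'n. continuous_on ({0..1}\<times>{0..1}) (\<lambda>(s,t). H s t) \<and>
           (\<forall>t\<in>{0..1}. H 1 t = M t \<and> H 0 t = mat 1) \<and> (\<forall>s\<in>{0..1}. \<forall>t\<in>{0..1}. invertible (H s t))"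
        if "continuous_on {0..1} M" "\<forall>t\<in>{0..1}. invertible (M t)" for M
        using GL_homotopy[OF that] .
      show "in_GL_fibre E p vadd vsmul y (\<lambda>e. g (y, G *v snd (h e)))"
        if trv: "triv X E p vadd vsmul W0 h g" and y: "y \<in> W0" and G: "invertible G"
        for W0 and h :: "'e \<Rightarrow> 'a \<times> (complex^'n)" and g y G
      proof -
        interpret tr: triv X E p vadd vsmul W0 h g by (rule trv)
        have "tr.T G y = (\<lambda>e. g (y, G *v snd (h e)))" by (simp add: tr.T_def fun_eq_iff)
        then show ?thesis using tr.model_GL[OF y G] by simp
      qed
      show "in_GL_fibre E p vadd vsmul y (\<lambda>e. \<phi> (f (\<phi> e)))"
        if "y \<in> topspace X" "in_GL_fibre E p vadd vsmul (\<sigma> y) f" for y f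
      proof -
        have "\<sigma> (\<sigma> y) = y" using ss(4) that(1) by blast
        then show ?thesis by (rule rf.conj_GL[OF _ that(2)])
      qed
      show "in_GL_fibre E p vadd vsmul y (\<lambda>e. e)" for y by (rule in_GL_fibre_id)
      show "in_GL_fibre E p vadd vsmul y f'"
        if "in_GL_fibre E p vadd vsmul y f" "\<forall>e\<in>fibre E p y. f e = f' e" for y f f'
        by (rule rf.in_GL_fibre_cong[OF that])
      show "invertible (matrix (\<lambda>v. the_inv_into UNIV (\<lambda>v. g (x, v)) (\<psi> t (g (x, v)))))"
        if trv: "triv X E p vadd vsmul W0 h g" and xW: "x \<in> W0" and t: "t \<in> {0..1}"
        for W0 and h :: "'e \<Rightarrow> 'a \<times> (complex^'n)" and g t
      proof -
        interpret tr: triv X E p vadd vsmul W0 h g by (rule trv)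
        have "in_GL_fibre E p vadd vsmul x (\<psi> t)" using gl t by blast
        from tr.Mat_GL(1)[OF xW this] have "invertible (tr.Mat x (\<psi> t))" .
        then show ?thesis by (simp add: tr.Mat_def tr.b0_def[abs_def])
      qed
    qed
    have "GL_bundle_path X E p vadd vsmul \<phi> \<Psi>"
    proof -
      have "in_GL_bundle X E p vadd vsmul \<phi> (\<Psi> t)" if t: "t \<in> {0..1}" for t
        using P(2) t unfolding in_GL_bundle_def by blast
      then show ?thesis using P(1) unfolding GL_bundle_path_def by blast
    qed
    then show ?thesis using P(3,4) by blast
  qed
  show ?thesis
  proof (intro conjI allI impI)
    fix x U \<psi>
    assume a: "x \<in> topspace X - fixed_locus X \<sigma> \<and> openin X U \<and> x \<in> U \<and>
             SL_fibre_path TYPE('n) E p vadd vsmul x \<psi>"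
    show "\<exists>\<Psi>. SL_bundle_path TYPE('n) X E p vadd vsmul \<phi> \<Psi> \<and>
                 (\<forall>t\<in>{0..1}. \<forall>e\<in>fibre E p x. \<Psi> t e = \<psi> t e) \<and>
                 (\<forall>t\<in>{0..1}. \<forall>e\<in>topspace E. p e \<notin> U \<union> \<sigma> ` U \<longrightarrow> \<Psi> t e = e)"
      by (rule SLpart) (use a in auto)
  next
    fix x U \<psi>
    assume a: "x \<in> topspace X - fixed_locus X \<sigma> \<and> openin X U \<and> x \<in> U \<and>
             GL_fibre_path E p vadd vsmul x \<psi>"
    show "\<exists>\<Psi>. GL_bundle_path X E p vadd vsmul \<phi> \<Psi> \<and>
                 (\<forall>t\<in>{0..1}. \<forall>e\<in>fibre E p x. \<Psi> t e = \<psi> t e) \<and>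
                 (\<forall>t\<in>{0..1}. \<forall>e\<in>topspace E. p e \<notin> U \<union> \<sigma> ` U \<longrightarrow> \<Psi> t e = e)"
      by (rule GLpart) (use a in auto)
  qed
qed

end
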